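(* Assume $h$ satisfies Assumptions 1 and 2 and takes values in $[0,1]$, and $\Delta=\{\delta:\|\delta\|_2\le\varepsilon\}$ for a constant $\varepsilon>0$. Suppose $A_{\text{Vanilla}}$ is run for $T$ steps with mini-batch size $b$ and step sizes $\alpha_{w,t}\le c/t$ for some $c>0$. Let $\lambda_{\text{Vanilla}}:=\beta c$. Then $$\mathcal{E}_{\text{gen}}(A_{\text{Vanilla}})\le \frac{b}{n}\Big(1+\frac{1}{\lambda_{\text{Vanilla}}}\Big)\Big(\frac{2L_w c}{b}(\varepsilon\beta n+L)\Big)^{\frac{1}{\lambda_{\text{Vanilla}}+1}}T^{\frac{\lambda_{\text{Vanilla}}}{\lambda_{\text{Vanilla}}+1}}.$$
   Context: Setting: a data point is $z=(x,y)$ drawn from an unknown distribution $\mathcal D$; $w\in W$ (a Euclidean space) is the model parameter and $\delta\in\Delta$ a perturbation; $h(w,\delta;z)$ is the loss. All norms are Euclidean. Define $h_{\max}(w;z)=\max_{\delta\in\Delta}h(w,\delta;z)$, population adversarial risk $R(w)=\mathbb E_{z\sim\mathcal D}[h_{\max}(w;z)]$, and for a dataset $S=(z_1,\dots,z_n)$ of $n$ i.i.d. samples from $\mathcal D$ the empirical adversarial risk $R_S(w)=\frac1n\sum_{j=1}^n h_{\max}(w;z_j)$. For a randomized algorithm $A$ with output $A(S)\in W$, the expected generalization adversarial risk is $\mathcal E_{\text{gen}}(A)=\mathbb E_{S,A}[R(A(S))-R_S(A(S))]$. Assumption 1: for every $z$, and all $w,w'\in W$, $\delta,\delta'\in\Delta$: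 $|h(w,\delta;z)-h(w',\delta';z)|^2\le L^2(\|w-w'\|^2+\|\delta-\delta'\|^2)$ and $|h(w,\delta;z)-h(w',\delta;z)|\le L_w\|w-w'\|$. Assumption 2: for every $z$, $h(\cdot,\cdot;z)$ is continuously differentiable and $\|\nabla_w h(w,\delta;z)-\nabla_w h(w',\delta';z)\|^2+\|\nabla_\delta h(w,\delta;z)-\nabla_\delta h(w',\delta';z)\|^2\le\beta^2(\|w-w'\|^2+\|\delta-\delta'\|^2)$. Algorithm $A_{\text{Vanilla}}$: starting from an initialization $w_0$, for $t=1,\dots,T$: draw a uniformly random mini-batch $B_t\subset S$ of size $b$; for each $z_j\in B_t$ pick $\delta_j\in\arg\max_{\delta\in\Delta}h(w_{t-1},\delta;z_j)$; set $w_t=w_{t-1}-\frac{\alpha_{w,t}}{b}\sum_{z_j\in B_t}\nabla_w h(w_{t-1},\delta_j;z_j)$. Output $w_T$. *)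

theory Defs
  imports "HOL-Probability.Probability"
begin

definition hmax :: "('w \<Rightarrow> 'd::euclidean_space \<Rightarrow> 'z \<Rightarrow> real) \<Rightarrow> real \<Rightarrow> 'w \<Rightarrow> 'z \<Rightarrow> real" where
  "hmax h eps w z = (SUP \<delta>\<in>cball 0 eps. h w \<delta> z)"

definition adv_risk :: "'z measure \<Rightarrow> ('w \<Rightarrow> 'd::euclidean_space \<Rightarrow> 'z \<Rightarrow> real) \<Rightarrow> real \<Rightarrow> 'w \<Rightarrow> real" where
  "adv_risk D h eps w = (\<integral>z. hmax h eps w z \<partial>D)"

definition emp_adv_risk :: "('w \<Rightarrow> 'd::euclidean_space \<Rightarrow> 'z \<Rightarrow> real) \<Rightarrow> real \<Rightarrow> nat \<Rightarrow> (nat \<Rightarrow> 'z) \<Rightarrow> 'w \<Rightarrow> real" where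
  "emp_adv_risk h eps n S w = (\<Sum>j<n. hmax h eps w (S j)) / real n"

definition grad_w :: "('w::euclidean_space \<Rightarrow> 'd \<Rightarrow> 'z \<Rightarrow> real) \<Rightarrow> 'w \<Rightarrow> 'd \<Rightarrow> 'z \<Rightarrow> 'w" where
  "grad_w h w \<delta> z = (SOME g. GDERIV (\<lambda>w'. h w' \<delta> z) w :> g)"

text \<open>Iterates of A_Vanilla for a fixed sequence of mini-batches Bs (index sets, Bs t for t = 1..T),
  with a fixed argmax selection rule sel.\<close>
primrec vanilla_iter ::
  "('w::euclidean_space \<Rightarrow> 'd \<Rightarrow> 'z \<Rightarrow> real) \<Rightarrow> ('w \<Rightarrow> 'z \<Rightarrow> 'd) \<Rightarrow> (nat \<Rightarrow> real) \<Rightarrow> nat \<Rightarrow> 'w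
   \<Rightarrow> (nat \<Rightarrow> 'z) \<Rightarrow> (nat \<Rightarrow> nat set) \<Rightarrow> nat \<Rightarrow> 'w" where
  "vanilla_iter h sel \<alpha> b w0 S Bs 0 = w0"
| "vanilla_iter h sel \<alpha> b w0 S Bs (Suc t) =
     (let w = vanilla_iter h sel \<alpha> b w0 S Bs t
      in w - (\<alpha> (Suc t) / real b) *\<^sub>R (\<Sum>j\<in>Bs (Suc t). grad_w h w (sel w (S j)) (S j)))"

text \<open>All possible mini-batch sequences: for each t = 1..T a subset of the indices {0..n-1} of size b.
  Uniform independent sampling = uniform distribution on this finite set.\<close>
definition batch_seqs :: "nat \<Rightarrow> nat \<Rightarrow> nat \<Rightarrow> (nat \<Rightarrow> nat set) set" where
  "batch_seqs n b T = Pi\<^sub>E {1..T} (\<lambda>_. {B. B \<subseteq> {..<n} \<and> card B = b})"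

definition gen_err_vanilla ::
  "'z measure \<Rightarrow> ('w::euclidean_space \<Rightarrow> 'd::euclidean_space \<Rightarrow> 'z \<Rightarrow> real) \<Rightarrow> real \<Rightarrow> ('w \<Rightarrow> 'z \<Rightarrow> 'd)
   \<Rightarrow> (nat \<Rightarrow> real) \<Rightarrow> nat \<Rightarrow> 'w \<Rightarrow> nat \<Rightarrow> nat \<Rightarrow> real" where
  "gen_err_vanilla D h eps sel \<alpha> b w0 n T =
     (\<integral>S. (\<Sum>Bs\<in>batch_seqs n b T.
              (let wT = vanilla_iter h sel \<alpha> b w0 S Bs T
               in adv_risk D h eps wT - emp_adv_risk h eps n S wT))
           / real (card (batch_seqs n b T))
       \<partial>(PiM {..<n} (\<lambda>_. D)))"

end

theory Submission
  imports Defs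
begin

definition Pq :: "real \<Rightarrow> nat \<Rightarrow> nat \<Rightarrow> real" where
  "Pq q T t = (\<Prod>k\<in>{t<..T}. 1 + q / real k)"

lemma Pq_T[simp]: "Pq q T T = 1"
  by (simp add: Pq_def)

lemma Pq_step: "t < T \<Longrightarrow> Pq q T t = (1 + q / real (Suc t)) * Pq q T (Suc t)"
proof -
  assume "t < T"
  then have "{t<..T} = insert (Suc t) {Suc t<..T}" by auto
  then show ?thesis unfolding Pq_def by simp
qed

lemma Pq_nonneg: "q \<ge> 0 \<Longrightarrow> Pq q T t \<ge> 0"
  unfolding Pq_def by (intro prod_nonneg) auto

lemma ln_ge_one_minus_inv: "(x::real) > 0 \<Longrightarrow> ln x \<ge> 1 - 1 / x"
proof -
  assume x: "x > 0"
  have "ln (1/x) \<le> 1/x - 1" using ln_le_minus_one[of "1/x"] x by simp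
  moreover have "ln (1/x) = - ln x" using x by (simp add: ln_div)
  ultimately show ?thesis by simp
qed

lemma one_plus_le_ratio_powr:
  fixes q :: real and T :: nat
  assumes q: "q \<ge> 0" and T: "T \<ge> 1"
  shows "1 + q / real (Suc T) \<le> (real (Suc T) / real T) powr q"
proof -
  have pos: "real (Suc T) / real T > 0" using T by simp
  have "ln (real (Suc T) / real T) \<ge> 1 - 1 / (real (Suc T) / real T)"
    using pos by (rule ln_ge_one_minus_inv)
  also have "1 - 1 / (real (Suc T) / real T) = 1 / real (Suc T)"
    using T by (simp add: field_simps)
  finally have l: "ln (real (Suc T) / real T) \<ge> 1 / real (Suc T)" .
  have "1 + q / real (Suc T) \<le> 1 + q * ln (real (Suc T) / real T)"
    using mult_left_mono[OF l q] by simp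
  also have "\<dots> \<le> exp (q * ln (real (Suc T) / real T))"
    by (rule exp_ge_add_one_self)
  also have "\<dots> = (real (Suc T) / real T) powr q"
    using pos T by (simp add: powr_def mult.commute)
  finally show ?thesis .
qed

lemma Pq_bound:
  fixes q :: real
  assumes q: "q \<ge> 0" and m: "1 \<le> m" and mT: "m \<le> T"
  shows "Pq q T m \<le> (real T / real m) powr q"
  using mT
proof (induction T rule: dec_induct)
  case base
  then show ?case using m by simp
next
  case (step T)
  have T1: "T \<ge> 1" using step m by simp
  have "{m<..Suc T} = insert (Suc T) {m<..T}" using step by auto
  then have e: "Pq q (Suc T) m = (1 + q / real (Suc T)) * Pq q T m"
    unfolding Pq_def by simp
  also have "\<dots> \<le> (real (Suc T) / real T) powr q * (real T / real m) powr q"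
    by (intro mult_mono one_plus_le_ratio_powr q T1 step.IH) (auto simp: Pq_nonneg q)
  also have "\<dots> = (real (Suc T) / real T * (real T / real m)) powr q"
    by (rule powr_mult[symmetric])
  also have "real (Suc T) / real T * (real T / real m) = real (Suc T) / real m"
    using T1 by simp
  finally show ?case .
qed

lemma s_powr_bound:
  fixes s q :: real
  assumes s: "0 < s" "s \<le> 1" and q: "q \<ge> 0"
  shows "s powr q * (1 + q * (1 - s)) \<le> 1"
proof -
  have "1 + q * (1 - s) \<le> exp (q * (1 - s))" by (rule exp_ge_add_one_self)
  moreover have "0 \<le> q * (1 - s)" using q s by simp
  ultimately have "s powr q * (1 + q * (1 - s)) \<le> exp (q * ln s) * exp (q * (1 - s))"
    using s by (intro mult_mono) (auto simp: powr_def mult.commute)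
  also have "\<dots> = exp (q * (ln s + 1 - s))" by (simp add: exp_add[symmetric] algebra_simps)
  also have "\<dots> \<le> exp 0"
  proof -
    have "ln s \<le> s - 1" using s by (intro ln_le_minus_one) auto
    then have "q * (ln s + 1 - s) \<le> 0" using q by (simp add: mult_nonneg_nonpos)
    then show ?thesis by simp
  qed
  finally show ?thesis by simp
qed

lemma Pq_floor_bound:
  fixes q x :: real and T :: nat
  assumes q: "q > 0" and x: "0 < x" "x < real T"
  shows "Pq q T (nat \<lfloor>x\<rfloor>) \<le> (real T / x) powr q * (1 + q * (x - real (nat \<lfloor>x\<rfloor>)) / x)"
proof -
  define t0 where "t0 = nat \<lfloor>x\<rfloor>"
  have t0x: "real t0 \<le> x" and xt0: "x < real t0 + 1" using x unfolding t0_def by linarith+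
  define y where "y = real (Suc t0)"
  have y1: "y \<ge> 1" unfolding y_def by simp
  have xy: "x < y" using xt0 unfolding y_def by simp
  have yT: "Suc t0 \<le> T" using t0x x xt0 by linarith
  then have yT': "y \<le> real T" unfolding y_def by linarith
  have "Pq q T t0 = (1 + q / y) * Pq q T (Suc t0)"
    using yT by (simp add: Pq_step y_def)
  also have "\<dots> \<le> (1 + q / y) * (real T / y) powr q"
    using Pq_bound[OF less_imp_le[OF q] _ yT] q y1 by (intro mult_left_mono) (auto simp: y_def)
  finally have P1: "Pq q T t0 \<le> (1 + q / y) * (real T / y) powr q" .
  define s where "s = x / y"
  have s: "0 < s" "s \<le> 1" using x xy y1 unfolding s_def by auto
  define P where "P = s powr q"
  have Ppos: "P > 0" unfolding P_def using s by simp
  have P1': "P \<le> 1" unfolding P_def using s q by (simp add: powr_le1)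
  have Pk: "P * (1 + q * (1 - s)) \<le> 1" unfolding P_def using s q by (intro s_powr_bound) auto
  have Ty: "(real T / y) powr q = P * (real T / x) powr q"
  proof -
    have "real T / y = s * (real T / x)" using x y1 unfolding s_def by (simp add: field_simps)
    moreover have "(s * (real T / x)) powr q = s powr q * (real T / x) powr q"
      by (rule powr_mult)
    ultimately show ?thesis unfolding P_def by simp
  qed
  define u where "u = 1 / y"
  have u: "u \<ge> 1 - s"
  proof -
    have "1 - s = (y - x) / y" unfolding s_def using y1 by (simp add: field_simps)
    also have "\<dots> \<le> 1 / y" using t0x y1 unfolding y_def by (intro divide_right_mono) auto
    finally show ?thesis unfolding u_def .
  qed
  have sP: "1 / s - P \<ge> 0" using s P1' Ppos mult_mono[of P 1 s 1] by (simp add: field_simps)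
  have "q * u * (1 / s - P) \<ge> q * (1 - s) * (1 / s - P)"
    using u sP q by (intro mult_right_mono mult_left_mono) auto
  moreover have "q * (1 - s) * (1 / s - P) = q / s - q * P - q + q * P * s"
    using s by (simp add: field_simps)
  ultimately have key: "P * (1 + q * u) \<le> 1 + q - q / s + q * u / s"
    using Pk by (simp add: algebra_simps)
  have rhs: "1 + q - q / s + q * u / s = 1 + q * (x - real t0) / x"
  proof -
    have ye: "y = real t0 + 1" unfolding y_def by simp
    have a1: "q / s = q * y / x" unfolding s_def using x y1 by simp
    have a2: "q * u / s = q / x" unfolding s_def u_def using x y1 by simp
    show ?thesis unfolding a1 a2 ye using x by (simp add: field_simps)
  qed
  have "(1 + q / y) * (real T / y) powr q = (P * (1 + q * u)) * (real T / x) powr q"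
    unfolding Ty u_def by (simp add: algebra_simps)
  also have "\<dots> \<le> (1 + q * (x - real t0) / x) * (real T / x) powr q"
    using key rhs by (intro mult_right_mono) auto
  finally show ?thesis using P1 unfolding t0_def by (simp add: mult.commute)
qed

lemma choose_t0:
  fixes q K :: real and T :: nat
  assumes q: "q > 0" and K: "K \<ge> 0"
  shows "\<exists>t0\<le>T. real t0 + K / q * (Pq q T t0 - 1)
            \<le> (1 + 1 / q) * (K powr (1 / (q + 1)) * real T powr (q / (q + 1)))"
proof -
  define x where "x = K powr (1 / (q + 1)) * real T powr (q / (q + 1))"
  have x0: "x \<ge> 0" unfolding x_def by simp
  have xle: "x \<le> (1 + 1/q) * x" using x0 q by (simp add: field_simps)
  show ?thesis
  proof (cases "real T \<le> x")
    case True
    then show ?thesis using xle unfolding x_def[symmetric] by (intro exI[of _ T]) simp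
  next
    case False
    then have xT: "x < real T" by simp
    then have T0: "T > 0" using x0 by linarith
    show ?thesis
    proof (cases "x = 0")
      case True
      have "real T powr (q / (q + 1)) > 0" using T0 by simp
      then have "K powr (1 / (q + 1)) = 0" using True unfolding x_def by simp
      then have "K = 0" by simp
      then show ?thesis using T0 by (intro exI[of _ 0]) (simp add: x_def)
    next
      case False
      then have xpos: "x > 0" using x0 by simp
      then have Kpos: "K > 0" unfolding x_def using K by (cases "K = 0") auto
      define t0 where "t0 = nat \<lfloor>x\<rfloor>"
      have t0x: "real t0 \<le> x" unfolding t0_def using xpos by linarith
      have t0T: "t0 \<le> T" using t0x xT by linarith
      have xq: "x powr (q + 1) = K * real T powr q"
      proof -
        have "x powr (q + 1) = (K powr (1 / (q + 1))) powr (q + 1) * (real T powr (q / (q + 1))) powr (q + 1)"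
          unfolding x_def using K by (simp add: powr_mult)
        also have "\<dots> = K * real T powr q"
          using q K by (simp add: powr_powr)
        finally show ?thesis .
      qed
      have KT: "K * (real T / x) powr q = x"
      proof -
        have "K * (real T / x) powr q = K * real T powr q / x powr q"
          using xpos by (simp add: powr_divide)
        also have "\<dots> = x powr (q + 1) / x powr q" using xq by simp
        also have "\<dots> = x" using xpos by (simp add: powr_add)
        finally show ?thesis .
      qed
      have PB: "Pq q T t0 \<le> (real T / x) powr q * (1 + q * (x - real t0) / x)"
        unfolding t0_def using Pq_floor_bound[OF q xpos xT] .
      define Z where "Z = (real T / x) powr q"
      have KZ: "K * Z = x" unfolding Z_def by (rule KT)
      have "real t0 + K / q * (Pq q T t0 - 1) \<le> real t0 + K / q * (Z * (1 + q * (x - real t0) / x) - 1)"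
        using PB Kpos q unfolding Z_def by (intro add_left_mono mult_left_mono) auto
      also have "K / q * (Z * (1 + q * (x - real t0) / x) - 1) = (K * Z) / q + (K * Z) * (x - real t0) / x - K / q"
        using q xpos by (simp add: field_simps)
      also have "\<dots> = x / q + (x - real t0) - K / q"
        unfolding KZ using xpos by simp
      also have "real t0 + (x / q + (x - real t0) - K / q) \<le> (1 + 1 / q) * x"
        using Kpos q by (simp add: field_simps)
      finally show ?thesis using t0T unfolding x_def by blast
    qed
  qed
qed


definition grid :: "nat \<Rightarrow> 'a::euclidean_space \<Rightarrow> 'a" where
  "grid m x = (\<Sum>i\<in>Basis. (real_of_int \<lfloor>real (Suc m) * (x \<bullet> i)\<rfloor> / real (Suc m)) *\<^sub>R i)"

lemma grid_inner: "i \<in> Basis \<Longrightarrow> grid m x \<bullet> i = real_of_int \<lfloor>real (Suc m) * (x \<bullet> i)\<rfloor> / real (Suc m)"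
  unfolding grid_def by simp

lemma grid_measurable: "grid m \<in> borel_measurable (borel :: 'a::euclidean_space measure)"
  unfolding grid_def by measurable

lemma grid_countable: "countable (range (grid m :: 'a::euclidean_space \<Rightarrow> 'a))"
proof -
  define F :: "('a \<Rightarrow> int) \<Rightarrow> 'a" where
    "F k = (\<Sum>i\<in>Basis. (real_of_int (k i) / real (Suc m)) *\<^sub>R i)" for k
  have "range (grid m) \<subseteq> F ` (PiE Basis (\<lambda>_. UNIV))"
  proof
    fix y assume "y \<in> range (grid m :: 'a \<Rightarrow> 'a)"
    then obtain x where y: "y = grid m x" by auto
    define k where "k = restrict (\<lambda>i. \<lfloor>real (Suc m) * (x \<bullet> i)\<rfloor>) Basis"
    have "k \<in> PiE Basis (\<lambda>_. UNIV)" unfolding k_def by simp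
    moreover have "y = F k" unfolding y grid_def F_def k_def
      by (intro sum.cong) auto
    ultimately show "y \<in> F ` (PiE Basis (\<lambda>_. UNIV))" by auto
  qed
  moreover have "countable (F ` (PiE Basis (\<lambda>_. UNIV :: int set)))"
    by (intro countable_image countable_PiE) auto
  ultimately show ?thesis by (rule countable_subset)
qed

lemma grid_tendsto: "(\<lambda>m. grid m x) \<longlonglongrightarrow> (x::'a::euclidean_space)"
proof -
  have bnd: "norm (grid m x - x) \<le> real DIM('a) / real (Suc m)" for m
  proof -
    have "norm (grid m x - x) \<le> (\<Sum>i\<in>Basis. \<bar>(grid m x - x) \<bullet> i\<bar>)" by (rule norm_le_l1)
    also have "\<dots> \<le> (\<Sum>i\<in>(Basis::'a set). 1 / real (Suc m))"
    proof (intro sum_mono)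
      fix i :: 'a assume i: "i \<in> Basis"
      define y where "y = real (Suc m) * (x \<bullet> i)"
      have "(grid m x - x) \<bullet> i = (real_of_int \<lfloor>y\<rfloor> - y) / real (Suc m)"
        using i unfolding y_def by (simp add: grid_inner inner_diff_left field_simps)
      moreover have "\<bar>real_of_int \<lfloor>y\<rfloor> - y\<bar> \<le> 1" by linarith
      ultimately show "\<bar>(grid m x - x) \<bullet> i\<bar> \<le> 1 / real (Suc m)"
        by (simp add: abs_div divide_right_mono)
    qed
    also have "\<dots> = real DIM('a) / real (Suc m)" by simp
    finally show ?thesis .
  qed
  have "(\<lambda>m. real DIM('a) * inverse (real (Suc m))) \<longlonglongrightarrow> 0"
    by (rule tendsto_mult_right_zero[OF LIMSEQ_inverse_real_of_nat])
  then have "(\<lambda>m. real DIM('a) / real (Suc m)) \<longlonglongrightarrow> 0"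
    by (simp add: divide_inverse)
  moreover have "\<forall>\<^sub>F m in sequentially. norm (grid m x - x) \<le> real DIM('a) / real (Suc m)"
    using bnd by (intro always_eventually allI)
  ultimately have "(\<lambda>m. grid m x - x) \<longlonglongrightarrow> 0"
    by (intro Lim_null_comparison[of "\<lambda>m. grid m x - x" "\<lambda>m. real DIM('a) / real (Suc m)"])
  then show ?thesis
    by (rule LIM_zero_cancel)
qed

lemma caratheodory_measurable:
  fixes f :: "'a::euclidean_space \<Rightarrow> 'b \<Rightarrow> real"
  assumes meas: "\<And>x. (\<lambda>y. f x y) \<in> borel_measurable M"
    and cont: "\<And>y. continuous_on UNIV (\<lambda>x. f x y)"
  shows "(\<lambda>p. f (fst p) (snd p)) \<in> borel_measurable (borel \<Otimes>\<^sub>M M)"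
proof (rule borel_measurable_LIMSEQ_real[where u="\<lambda>m p. f (grid m (fst p)) (snd p)"])
  fix p :: "'a \<times> 'b" assume "p \<in> space (borel \<Otimes>\<^sub>M M)"
  have "(\<lambda>m. grid m (fst p)) \<longlonglongrightarrow> fst p" by (rule grid_tendsto)
  moreover have "isCont (\<lambda>x. f x (snd p)) (fst p)"
    using cont[of "snd p"] by (simp add: continuous_on_eq_continuous_at)
  ultimately show "(\<lambda>m. f (grid m (fst p)) (snd p)) \<longlonglongrightarrow> f (fst p) (snd p)"
    by (rule isCont_tendsto_compose[rotated])
next
  fix m
  show "(\<lambda>p::'a \<times> 'b. f (grid m (fst p)) (snd p)) \<in> borel_measurable (borel \<Otimes>\<^sub>M M)"
  proof (rule measurable_compose_countable'[where I="range (grid m)" and f="\<lambda>i p. f i (snd p)" and g="\<lambda>p. grid m (fst p)"])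
    fix i show "(\<lambda>p. f i (snd p)) \<in> borel_measurable (borel \<Otimes>\<^sub>M M)"
      using meas[of i] by measurable
  next
    show "countable (range (grid m :: 'a \<Rightarrow> 'a))" by (rule grid_countable)
  next
    show "(\<lambda>p::'a \<times> 'b. grid m (fst p)) \<in> measurable (borel \<Otimes>\<^sub>M M) (count_space (range (grid m)))"
    proof (rule measurable_count_space_eq_countable[OF grid_countable, THEN iffD2], intro conjI ballI)
      fix a' assume "a' \<in> range (grid m :: 'a \<Rightarrow> 'a)"
      then obtain a where a': "a' = grid m a" by auto
      have "(\<lambda>p::'a \<times> 'b. grid m (fst p)) -` {grid m a} \<inter> space (borel \<Otimes>\<^sub>M M)
            = (grid m -` {grid m a} \<inter> space borel) \<times> space M"
        by (auto simp: space_pair_measure)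
      moreover have "grid m -` {grid m a} \<inter> space borel \<in> sets borel"
        using grid_measurable[of m] by (rule measurable_sets) simp
      ultimately show "(\<lambda>p::'a \<times> 'b. grid m (fst p)) -` {a'} \<inter> space (borel \<Otimes>\<^sub>M M) \<in> sets (borel \<Otimes>\<^sub>M M)"
        unfolding a' by simp
    qed auto
  qed
qed


lemma dir_limit:
  fixes f :: "'a::euclidean_space \<Rightarrow> real"
  assumes d: "(f has_derivative (\<lambda>x. x \<bullet> g)) (at w)"
  shows "(\<lambda>m. (f (w + (1 / real (Suc m)) *\<^sub>R v) - f w) * real (Suc m)) \<longlonglongrightarrow> v \<bullet> g"
proof -
  define F where "F t = f (w + t *\<^sub>R v)" for t :: real
  have line: "((\<lambda>t::real. w + t *\<^sub>R v) has_derivative (\<lambda>t. t *\<^sub>R v)) (at 0)"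
    by (auto intro!: derivative_eq_intros)
  have d': "(f has_derivative (\<lambda>x. x \<bullet> g)) (at ((\<lambda>t::real. w + t *\<^sub>R v) 0))"
    using d by simp
  have "((\<lambda>t. f (w + t *\<^sub>R v)) has_derivative (\<lambda>t. (t *\<^sub>R v) \<bullet> g)) (at 0)"
    using has_derivative_compose[OF line d'] by simp
  then have "(F has_derivative (\<lambda>t. (v \<bullet> g) * t)) (at 0)"
    unfolding F_def by (simp add: inner_scaleR_left mult.commute)
  then have "(F has_field_derivative (v \<bullet> g)) (at 0)"
    by (simp add: has_field_derivative_def)
  then have lim: "((\<lambda>t. (F (0 + t) - F 0) / t) \<longlongrightarrow> v \<bullet> g) (at 0)"
    by (rule DERIV_D)
  have s: "filterlim (\<lambda>m. 1 / real (Suc m)) (at 0) sequentially"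
  proof (subst filterlim_at, intro conjI)
    show "\<forall>\<^sub>F m in sequentially. 1 / real (Suc m) \<in> UNIV \<and> 1 / real (Suc m) \<noteq> 0"
      by simp
    show "(\<lambda>m. 1 / real (Suc m)) \<longlonglongrightarrow> 0"
      using LIMSEQ_inverse_real_of_nat by (simp add: divide_inverse)
  qed
  have "((\<lambda>t. (F (0 + t) - F 0) / t) \<circ> (\<lambda>m. 1 / real (Suc m))) \<longlonglongrightarrow> v \<bullet> g"
    using filterlim_compose[OF lim s] by (simp add: comp_def)
  then show ?thesis unfolding F_def comp_def by simp
qed

lemma grad_unique:
  fixes f :: "'a::euclidean_space \<Rightarrow> real"
  assumes d: "(f has_derivative (\<lambda>x. x \<bullet> G)) (at w)"
  shows "(SOME g. GDERIV f w :> g) = G"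
proof -
  have ex: "GDERIV f w :> G" using d unfolding gderiv_def .
  define g where "g = (SOME g. GDERIV f w :> g)"
  have "GDERIV f w :> g" unfolding g_def using ex by (rule someI)
  then have "(\<lambda>x. x \<bullet> g) = (\<lambda>x. x \<bullet> G)"
    using ex unfolding gderiv_def by (rule has_derivative_unique)
  from fun_cong[OF this, of "g - G"]
  have "(g - G) \<bullet> g = (g - G) \<bullet> G" .
  then have "(g - G) \<bullet> (g - G) = 0" by (simp add: inner_diff_right)
  then show ?thesis unfolding g_def[symmetric] by simp
qed

lemma t1:
  fixes x L a d :: real
  assumes A: "\<bar>x\<bar>\<^sup>2 \<le> L\<^sup>2 * (a\<^sup>2 + d\<^sup>2)" and L: "L \<ge> 0"
  shows "\<bar>x\<bar> \<le> L * sqrt (a\<^sup>2 + d\<^sup>2)"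
proof -
  have "(L * sqrt (a\<^sup>2 + d\<^sup>2))\<^sup>2 = L\<^sup>2 * (a\<^sup>2 + d\<^sup>2)"
    by (simp add: power_mult_distrib)
  then have "\<bar>x\<bar>\<^sup>2 \<le> (L * sqrt (a\<^sup>2 + d\<^sup>2))\<^sup>2" using A by simp
  moreover have "0 \<le> L * sqrt (a\<^sup>2 + d\<^sup>2)" using L by simp
  ultimately show ?thesis by (rule power2_le_imp_le)
qed

locale vsetup =
  fixes D :: "'z measure"
    and h :: "'w::euclidean_space \<Rightarrow> 'd::euclidean_space \<Rightarrow> 'z \<Rightarrow> real"
    and sel :: "'w \<Rightarrow> 'z \<Rightarrow> 'd"
    and \<alpha> :: "nat \<Rightarrow> real"
    and w0 :: 'w
    and L Lw \<beta> eps c :: real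
    and n b T :: nat
  assumes D: "prob_space D"
    and meas_h: "\<And>w \<delta>. (\<lambda>z. h w \<delta> z) \<in> borel_measurable D"
    and meas_sel: "(\<lambda>p. sel (fst p) (snd p)) \<in> borel \<Otimes>\<^sub>M D \<rightarrow>\<^sub>M borel"
    and eps: "eps > 0"
    and range01: "\<And>w \<delta> z. \<delta> \<in> cball 0 eps \<Longrightarrow> 0 \<le> h w \<delta> z \<and> h w \<delta> z \<le> 1"
    and L: "L \<ge> 0" and Lw: "Lw \<ge> 0" and beta: "\<beta> > 0"
    and A1a: "\<And>z w w' \<delta> \<delta>'. \<delta> \<in> cball 0 eps \<Longrightarrow> \<delta>' \<in> cball 0 eps \<Longrightarrow>
               \<bar>h w \<delta> z - h w' \<delta>' z\<bar>\<^sup>2 \<le> L\<^sup>2 * ((norm (w - w'))\<^sup>2 + (norm (\<delta> - \<delta>'))\<^sup>2)"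
    and A1b: "\<And>z w w' \<delta>. \<delta> \<in> cball 0 eps \<Longrightarrow> \<bar>h w \<delta> z - h w' \<delta> z\<bar> \<le> Lw * norm (w - w')"
    and A2: "\<And>z. \<exists>Gw Gd.
               (\<forall>w \<delta>. \<delta> \<in> cball 0 eps \<longrightarrow>
                  ((\<lambda>p. h (fst p) (snd p) z) has_derivative
                     (\<lambda>q. Gw w \<delta> \<bullet> fst q + Gd w \<delta> \<bullet> snd q)) (at (w, \<delta>) within UNIV \<times> cball 0 eps))
             \<and> (\<forall>w w' \<delta> \<delta>'. \<delta> \<in> cball 0 eps \<longrightarrow> \<delta>' \<in> cball 0 eps \<longrightarrow>
                  (norm (Gw w \<delta> - Gw w' \<delta>'))\<^sup>2 + (norm (Gd w \<delta> - Gd w' \<delta>'))\<^sup>2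
                    \<le> \<beta>\<^sup>2 * ((norm (w - w'))\<^sup>2 + (norm (\<delta> - \<delta>'))\<^sup>2))"
    and sel_argmax: "\<And>w z. sel w z \<in> cball 0 eps \<and> (\<forall>\<delta>\<in>cball 0 eps. h w \<delta> z \<le> h w (sel w z) z)"
    and c: "c > 0"
    and step: "\<And>t. 1 \<le> t \<Longrightarrow> 0 \<le> \<alpha> t \<and> \<alpha> t \<le> c / real t"
    and b: "1 \<le> b" "b \<le> n"
begin

lemma h_lip_L:
  fixes \<delta> \<delta>' :: 'd and w w' :: 'w and z :: 'z
  assumes "\<delta> \<in> cball 0 eps" "\<delta>' \<in> cball 0 eps"
  shows "\<bar>h w \<delta> z - h w' \<delta>' z\<bar> \<le> L * sqrt ((norm (w - w'))\<^sup>2 + (norm (\<delta> - \<delta>'))\<^sup>2)"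
  by (rule t1[OF A1a[OF assms] L])

lemma h_lip_w:
  fixes \<delta> :: 'd and w w' :: 'w and z :: 'z
  assumes d: "\<delta> \<in> cball 0 eps"
  shows "\<bar>h w \<delta> z - h w' \<delta> z\<bar> \<le> L * norm (w - w')"
proof -
  have "\<bar>h w \<delta> z - h w' \<delta> z\<bar> \<le> L * sqrt ((norm (w - w'))\<^sup>2 + (norm (\<delta> - \<delta>))\<^sup>2)"
    by (rule h_lip_L[OF d d])
  moreover have "sqrt ((norm (w - w'))\<^sup>2 + (norm (\<delta> - \<delta>))\<^sup>2) = norm (w - w')" by simp
  ultimately show ?thesis by simp
qed

lemma grad_facts:
  "(\<forall>w \<delta>. \<delta> \<in> cball 0 eps \<longrightarrow>
      ((\<lambda>w'. h w' \<delta> z) has_derivative (\<lambda>x. x \<bullet> grad_w h w \<delta> z)) (at w)) \<and>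
   (\<forall>w w' \<delta> \<delta>'. \<delta> \<in> cball 0 eps \<longrightarrow> \<delta>' \<in> cball 0 eps \<longrightarrow>
      norm (grad_w h w \<delta> z - grad_w h w' \<delta>' z) \<le> \<beta> * (norm (w - w') + norm (\<delta> - \<delta>')))"
proof -
  obtain Gw :: "'w \<Rightarrow> 'd \<Rightarrow> 'w" and Gd :: "'w \<Rightarrow> 'd \<Rightarrow> 'd" where G:
     "(\<forall>w \<delta>. \<delta> \<in> cball 0 eps \<longrightarrow>
                  ((\<lambda>p. h (fst p) (snd p) z) has_derivative
                     (\<lambda>q. Gw w \<delta> \<bullet> fst q + Gd w \<delta> \<bullet> snd q)) (at (w, \<delta>) within UNIV \<times> cball 0 eps))
             \<and> (\<forall>w w' \<delta> \<delta>'. \<delta> \<in> cball 0 eps \<longrightarrow> \<delta>' \<in> cball 0 eps \<longrightarrow>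
                  (norm (Gw w \<delta> - Gw w' \<delta>'))\<^sup>2 + (norm (Gd w \<delta> - Gd w' \<delta>'))\<^sup>2
                    \<le> \<beta>\<^sup>2 * ((norm (w - w'))\<^sup>2 + (norm (\<delta> - \<delta>'))\<^sup>2))"
    using A2[of z] by (elim exE) (rule that)
  note G1 = conjunct1[OF G, rule_format]
  note G2 = conjunct2[OF G, rule_format]
  have pd: "((\<lambda>w'. h w' \<delta> z) has_derivative (\<lambda>x. x \<bullet> Gw w \<delta>)) (at w)" if \<delta>: "\<delta> \<in> cball 0 eps" for w :: 'w and \<delta> :: 'd
  proof -
    have f: "((\<lambda>w'. (w', \<delta>)) has_derivative (\<lambda>x. (x, 0))) (at w within UNIV)"
      by (rule has_derivative_Pair[OF has_derivative_ident has_derivative_const])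
    have img: "(\<lambda>w'. (w', \<delta>)) ` UNIV \<subseteq> UNIV \<times> cball 0 eps" using \<delta> by blast
    have gd: "((\<lambda>p. h (fst p) (snd p) z) has_derivative
          (\<lambda>q. Gw (fst p) (snd p) \<bullet> fst q + Gd (fst p) (snd p) \<bullet> snd q)) (at p within UNIV \<times> cball 0 eps)"
      if p: "p \<in> UNIV \<times> cball 0 eps" for p :: "'w \<times> 'd"
    proof -
      have sp: "snd p \<in> cball 0 eps" using p by (simp add: mem_Times_iff)
      have "((\<lambda>p. h (fst p) (snd p) z) has_derivative
          (\<lambda>q. Gw (fst p) (snd p) \<bullet> fst q + Gd (fst p) (snd p) \<bullet> snd q)) (at (fst p, snd p) within UNIV \<times> cball 0 eps)"
        by (rule G1[OF sp])
      then show ?thesis by simp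
    qed
    have "((\<lambda>x. h (fst (x, \<delta>)) (snd (x, \<delta>)) z) has_derivative
            (\<lambda>y. (\<lambda>p q. Gw (fst p) (snd p) \<bullet> fst q + Gd (fst p) (snd p) \<bullet> snd q) (w, \<delta>) (y, 0))) (at w within UNIV)"
      by (rule has_derivative_in_compose2[where t="UNIV \<times> cball 0 eps" and g="\<lambda>p. h (fst p) (snd p) z"
            and g'="\<lambda>p q. Gw (fst p) (snd p) \<bullet> fst q + Gd (fst p) (snd p) \<bullet> snd q", OF gd img UNIV_I f])
    then have "((\<lambda>x. h x \<delta> z) has_derivative (\<lambda>y. Gw w \<delta> \<bullet> y)) (at w)"
      by simp
    then show ?thesis by (simp add: inner_commute)
  qed
  have ge: "grad_w h w \<delta> z = Gw w \<delta>" if \<delta>: "\<delta> \<in> cball 0 eps" for w :: 'w and \<delta> :: 'd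
    unfolding grad_w_def by (rule grad_unique[OF pd[OF \<delta>]])
  show ?thesis
  proof (intro conjI allI impI)
    fix w :: 'w and \<delta> :: 'd assume d: "\<delta> \<in> cball 0 eps"
    show "((\<lambda>w'. h w' \<delta> z) has_derivative (\<lambda>x. x \<bullet> grad_w h w \<delta> z)) (at w)"
      by (subst ge[OF d]) (rule pd[OF d])
  next
    fix w w' :: 'w and \<delta> \<delta>' :: 'd assume d: "\<delta> \<in> cball 0 eps" "\<delta>' \<in> cball 0 eps"
    have "(norm (Gw w \<delta> - Gw w' \<delta>'))\<^sup>2 \<le> \<beta>\<^sup>2 * ((norm (w - w'))\<^sup>2 + (norm (\<delta> - \<delta>'))\<^sup>2)"
      using G2[OF d, where w=w and w'=w'] zero_le_power2[of "norm (Gd w \<delta> - Gd w' \<delta>')"] by linarith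
    also have "\<dots> \<le> \<beta>\<^sup>2 * (norm (w - w') + norm (\<delta> - \<delta>'))\<^sup>2"
    proof (rule mult_left_mono)
      show "(norm (w - w'))\<^sup>2 + (norm (\<delta> - \<delta>'))\<^sup>2 \<le> (norm (w - w') + norm (\<delta> - \<delta>'))\<^sup>2"
        unfolding power2_sum by simp
    qed simp
    also have "\<dots> = (\<beta> * (norm (w - w') + norm (\<delta> - \<delta>')))\<^sup>2"
      by (rule power_mult_distrib[symmetric])
    finally have sq: "(norm (Gw w \<delta> - Gw w' \<delta>'))\<^sup>2 \<le> (\<beta> * (norm (w - w') + norm (\<delta> - \<delta>')))\<^sup>2" .
    have "0 \<le> \<beta> * (norm (w - w') + norm (\<delta> - \<delta>'))" using beta by simp
    with sq have "norm (Gw w \<delta> - Gw w' \<delta>') \<le> \<beta> * (norm (w - w') + norm (\<delta> - \<delta>'))"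
      by (rule power2_le_imp_le)
    then show "norm (grad_w h w \<delta> z - grad_w h w' \<delta>' z) \<le> \<beta> * (norm (w - w') + norm (\<delta> - \<delta>'))"
      by (subst ge[OF d(1)], subst ge[OF d(2)])
  qed
qed

lemma grad_deriv: "\<delta> \<in> cball 0 eps \<Longrightarrow> ((\<lambda>w'. h w' \<delta> z) has_derivative (\<lambda>x. x \<bullet> grad_w h w \<delta> z)) (at w)"
  using grad_facts[of z] by blast

lemma grad_lip: "\<delta> \<in> cball 0 eps \<Longrightarrow> \<delta>' \<in> cball 0 eps \<Longrightarrow>
      norm (grad_w h w \<delta> z - grad_w h w' \<delta>' z) \<le> \<beta> * (norm (w - w') + norm (\<delta> - \<delta>'))"
  using grad_facts[of z] by blast

lemma grad_lim: "\<delta> \<in> cball 0 eps \<Longrightarrow>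
   (\<lambda>m. (h (w + (1 / real (Suc m)) *\<^sub>R v) \<delta> z - h w \<delta> z) * real (Suc m)) \<longlonglongrightarrow> v \<bullet> grad_w h w \<delta> z"
  by (rule dir_limit[OF grad_deriv])

lemma grad_bound: assumes d: "\<delta> \<in> cball 0 eps" shows "norm (grad_w h w \<delta> z) \<le> L"
proof -
  define g where "g = grad_w h w \<delta> z"
  have lim: "(\<lambda>m. \<bar>(h (w + (1 / real (Suc m)) *\<^sub>R g) \<delta> z - h w \<delta> z) * real (Suc m)\<bar>) \<longlonglongrightarrow> \<bar>g \<bullet> g\<bar>"
    unfolding g_def by (intro tendsto_rabs grad_lim d)
  have "\<bar>(h (w + (1 / real (Suc m)) *\<^sub>R g) \<delta> z - h w \<delta> z) * real (Suc m)\<bar> \<le> L * norm g" for m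
  proof -
    define x where "x = h (w + (1 / real (Suc m)) *\<^sub>R g) \<delta> z - h w \<delta> z"
    have "\<bar>x\<bar> \<le> L * norm ((w + (1 / real (Suc m)) *\<^sub>R g) - w)"
      unfolding x_def by (rule h_lip_w[OF d])
    also have "\<dots> = L * norm g / real (Suc m)" by simp
    finally have e: "\<bar>x\<bar> * real (Suc m) \<le> L * norm g"
      by (simp add: pos_le_divide_eq del: of_nat_Suc)
    have "\<bar>x * real (Suc m)\<bar> = \<bar>x\<bar> * real (Suc m)" by (simp add: abs_mult)
    then show ?thesis using e unfolding x_def by simp
  qed
  then have ev: "\<forall>\<^sub>F m in sequentially. \<bar>(h (w + (1 / real (Suc m)) *\<^sub>R g) \<delta> z - h w \<delta> z) * real (Suc m)\<bar> \<le> L * norm g"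
    by (intro always_eventually allI)
  have "\<bar>g \<bullet> g\<bar> \<le> L * norm g"
    by (rule tendsto_upperbound[OF lim ev trivial_limit_sequentially])
  then have gg: "norm g * norm g \<le> L * norm g" by (simp add: power2_norm_eq_inner[symmetric] power2_eq_square)
  show ?thesis
  proof (cases "norm g = 0")
    case True
    then show ?thesis using L unfolding g_def by simp
  next
    case False
    then have "norm g > 0" by simp
    then show ?thesis using gg unfolding g_def by (simp add: mult_le_cancel_right)
  qed
qed

lemma hmax_eq: "hmax h eps w z = h w (sel w z) z"
  unfolding hmax_def
proof (rule cSup_eq_maximum)
  show "h w (sel w z) z \<in> (\<lambda>\<delta>. h w \<delta> z) ` cball 0 eps"
    using sel_argmax[of w z] by (intro imageI) blast
  fix x assume "x \<in> (\<lambda>\<delta>. h w \<delta> z) ` cball 0 eps"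
  then obtain \<delta> where "\<delta> \<in> cball 0 eps" "x = h w \<delta> z" by blast
  then show "x \<le> h w (sel w z) z" using sel_argmax[of w z] by blast
qed

lemma hmax_range: "0 \<le> hmax h eps w z \<and> hmax h eps w z \<le> 1"
  using range01[of "sel w z" w z] sel_argmax[of w z] unfolding hmax_eq by blast

lemma hmax_lip: "\<bar>hmax h eps w z - hmax h eps w' z\<bar> \<le> Lw * norm (w - w')"
proof -
  have a: "hmax h eps w z \<le> hmax h eps w' z + Lw * norm (w - w')" for w w'
  proof -
    have "hmax h eps w z = h w (sel w z) z" by (rule hmax_eq)
    also have "\<dots> \<le> h w' (sel w z) z + Lw * norm (w - w')"
      using A1b[where \<delta>="sel w z" and z=z and w=w and w'=w'] sel_argmax[of w z] by linarith
    also have "h w' (sel w z) z \<le> h w' (sel w' z) z" using sel_argmax[of w z] sel_argmax[of w' z] by blast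
    finally show ?thesis by (simp add: hmax_eq)
  qed
  show ?thesis using a[of w w'] a[of w' w] by (simp add: norm_minus_commute abs_le_iff)
qed

end

lemma Pq_telescope:
  fixes q :: real
  assumes "t0 \<le> T"
  shows "q * (\<Sum>s\<in>{t0<..T}. Pq q T s / real s) = Pq q T t0 - 1"
  using assms
proof (induction t0 rule: inc_induct)
  case base
  then show ?case by simp
next
  case (step t)
  have "{t<..T} = insert (Suc t) {Suc t<..T}" using step by auto
  then have "q * (\<Sum>s\<in>{t<..T}. Pq q T s / real s) = q * (Pq q T (Suc t) / real (Suc t)) + q * (\<Sum>s\<in>{Suc t<..T}. Pq q T s / real s)"
    by (simp add: distrib_left)
  also have "\<dots> = q * (Pq q T (Suc t) / real (Suc t)) + (Pq q T (Suc t) - 1)"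
    using step.IH by simp
  also have "\<dots> = Pq q T t - 1"
    using Pq_step[of t T q] step by (simp add: field_simps)
  finally show ?case .
qed

context vsetup
begin

abbreviation "BS \<equiv> batch_seqs n b T"
abbreviation "W S Bs t \<equiv> vanilla_iter h sel \<alpha> b w0 S Bs t"

lemma BS_elem: "Bs \<in> BS \<Longrightarrow> t \<in> {1..T} \<Longrightarrow> Bs t \<subseteq> {..<n} \<and> card (Bs t) = b"
  unfolding batch_seqs_def by (auto simp: PiE_iff)

lemma sel_in: "sel w z \<in> cball 0 eps" using sel_argmax by blast

lemma iter_step_bound:
  assumes Bs: "Bs \<in> BS" and t: "Suc t \<le> T" and SS: "\<forall>j. j \<noteq> i \<longrightarrow> S' j = S j"
  shows "norm (W S Bs (Suc t) - W S' Bs (Suc t))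
         \<le> (1 + \<alpha> (Suc t) * \<beta>) * norm (W S Bs t - W S' Bs t) + \<alpha> (Suc t) * (2 * \<beta> * eps)
           + (if i \<in> Bs (Suc t) then \<alpha> (Suc t) * (2 * L) / real b else 0)"
proof -
  define B where "B = Bs (Suc t)"
  define w where "w = W S Bs t"
  define w' where "w' = W S' Bs t"
  define a where "a = \<alpha> (Suc t)"
  define \<Delta> where "\<Delta> = norm (w - w')"
  have Bfin: "finite B" and Bc: "card B = b"
    using BS_elem[OF Bs, of "Suc t"] t unfolding B_def by (auto intro: finite_subset)
  have bpos: "real b > 0" using b by simp
  have a0: "a \<ge> 0" using step[of "Suc t"] unfolding a_def by simp
  define g where "g j = grad_w h w (sel w (S j)) (S j)" for j
  define g' where "g' j = grad_w h w' (sel w' (S' j)) (S' j)" for j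
  have eq: "W S Bs (Suc t) - W S' Bs (Suc t) = (w - w') - (a / real b) *\<^sub>R (\<Sum>j\<in>B. g j - g' j)"
    by (simp add: w_def w'_def a_def B_def g_def g'_def Let_def sum_subtractf scaleR_diff_right algebra_simps)
  have each: "norm (g j - g' j) \<le> \<beta> * (\<Delta> + 2 * eps) + (if j = i then 2 * L else 0)" for j
  proof (cases "j = i")
    case True
    have "norm (g j - g' j) \<le> norm (g j) + norm (g' j)" by (rule norm_triangle_ineq4)
    also have "\<dots> \<le> L + L" unfolding g_def g'_def by (intro add_mono grad_bound sel_in)
    moreover have "0 \<le> \<beta> * (\<Delta> + 2 * eps)" using beta eps unfolding \<Delta>_def by simp
    ultimately show ?thesis using True by simp
  next
    case False
    then have Sj: "S' j = S j" using SS by simp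
    have "norm (g j - g' j) \<le> \<beta> * (norm (w - w') + norm (sel w (S j) - sel w' (S j)))"
      unfolding g_def g'_def Sj by (intro grad_lip sel_in)
    also have "norm (sel w (S j) - sel w' (S j)) \<le> 2 * eps"
    proof -
      have "norm (sel w (S j) - sel w' (S j)) \<le> norm (sel w (S j)) + norm (sel w' (S j))"
        by (rule norm_triangle_ineq4)
      also have "\<dots> \<le> eps + eps" using sel_in[of w "S j"] sel_in[of w' "S j"] by (intro add_mono) auto
      finally show ?thesis by simp
    qed
    then have "\<beta> * (norm (w - w') + norm (sel w (S j) - sel w' (S j))) \<le> \<beta> * (norm (w - w') + 2 * eps)"
      using beta by (intro mult_left_mono) auto
    finally show ?thesis using False unfolding \<Delta>_def by simp
  qed
  have sumb: "norm (\<Sum>j\<in>B. g j - g' j) \<le> real b * (\<beta> * (\<Delta> + 2 * eps)) + (if i \<in> B then 2 * L else 0)"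
  proof -
    have "norm (\<Sum>j\<in>B. g j - g' j) \<le> (\<Sum>j\<in>B. norm (g j - g' j))" by (rule norm_sum)
    also have "\<dots> \<le> (\<Sum>j\<in>B. \<beta> * (\<Delta> + 2 * eps) + (if j = i then 2 * L else 0))"
      by (intro sum_mono each)
    also have "\<dots> = real b * (\<beta> * (\<Delta> + 2 * eps)) + (if i \<in> B then 2 * L else 0)"
      using Bfin Bc by (simp add: sum.distrib)
    finally show ?thesis .
  qed
  have "norm (W S Bs (Suc t) - W S' Bs (Suc t)) \<le> norm (w - w') + norm ((a / real b) *\<^sub>R (\<Sum>j\<in>B. g j - g' j))"
    unfolding eq by (rule norm_triangle_ineq4)
  also have "norm ((a / real b) *\<^sub>R (\<Sum>j\<in>B. g j - g' j)) = (a / real b) * norm (\<Sum>j\<in>B. g j - g' j)"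
    using a0 bpos by simp
  also have "(a / real b) * norm (\<Sum>j\<in>B. g j - g' j) \<le> (a / real b) * (real b * (\<beta> * (\<Delta> + 2 * eps)) + (if i \<in> B then 2 * L else 0))"
    using a0 bpos sumb by (intro mult_left_mono) auto
  also have "(a / real b) * (real b * (\<beta> * (\<Delta> + 2 * eps)) + (if i \<in> B then 2 * L else 0))
      = a * \<beta> * \<Delta> + a * (2 * \<beta> * eps) + (if i \<in> B then a * (2 * L) / real b else 0)"
    using bpos by (simp add: field_simps)
  finally show ?thesis unfolding \<Delta>_def a_def B_def w_def w'_def by (simp add: algebra_simps)
qed

lemma iter_same:
  assumes Bs: "Bs \<in> BS" and t: "Suc t \<le> T" and SS: "\<forall>j. j \<noteq> i \<longrightarrow> S' j = S j"
    and ni: "i \<notin> Bs (Suc t)" and eq: "W S Bs t = W S' Bs t"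
  shows "W S Bs (Suc t) = W S' Bs (Suc t)"
proof -
  have "(\<Sum>j\<in>Bs (Suc t). grad_w h (W S Bs t) (sel (W S Bs t) (S j)) (S j))
      = (\<Sum>j\<in>Bs (Suc t). grad_w h (W S' Bs t) (sel (W S' Bs t) (S' j)) (S' j))"
    using ni SS eq by (intro sum.cong) auto
  then show ?thesis using eq by (simp add: Let_def)
qed

lemma no_hit:
  assumes Bs: "Bs \<in> BS" and SS: "\<forall>j. j \<noteq> i \<longrightarrow> S' j = S j"
  shows "t0 \<le> T \<Longrightarrow> (\<forall>s\<in>{1..t0}. i \<notin> Bs s) \<Longrightarrow> W S Bs t0 = W S' Bs t0"
proof (induction t0)
  case 0
  then show ?case by simp
next
  case (Suc t)
  then have "W S Bs t = W S' Bs t" by auto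
  then show ?case using iter_same[OF Bs _ SS] Suc.prems by auto
qed

definition cc :: "(nat \<Rightarrow> nat set) \<Rightarrow> nat \<Rightarrow> nat \<Rightarrow> real" where
  "cc Bs i s = \<alpha> s * (2 * \<beta> * eps) + (if i \<in> Bs s then \<alpha> s * (2 * L) / real b else 0)"

lemma cc_nonneg: "1 \<le> s \<Longrightarrow> cc Bs i s \<ge> 0"
  unfolding cc_def using step[of s] beta eps L b by auto

lemma unroll:
  assumes Bs: "Bs \<in> BS" and SS: "\<forall>j. j \<noteq> i \<longrightarrow> S' j = S j"
    and t0: "t0 \<le> t" and tT: "t \<le> T" and e0: "W S Bs t0 = W S' Bs t0"
  shows "norm (W S Bs t - W S' Bs t) \<le> (\<Sum>s\<in>{t0<..t}. (\<Prod>k\<in>{s<..t}. 1 + \<alpha> k * \<beta>) * cc Bs i s)"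
  using t0 tT
proof (induction t rule: dec_induct)
  case base
  then show ?case using e0 by simp
next
  case (step t)
  have a0: "0 \<le> \<alpha> (Suc t)" using vsetup.step[OF vsetup_axioms, of "Suc t"] by simp
  have "norm (W S Bs (Suc t) - W S' Bs (Suc t))
         \<le> (1 + \<alpha> (Suc t) * \<beta>) * norm (W S Bs t - W S' Bs t) + cc Bs i (Suc t)"
    using iter_step_bound[OF Bs step.prems SS] unfolding cc_def by simp
  also have "\<dots> \<le> (1 + \<alpha> (Suc t) * \<beta>) * (\<Sum>s\<in>{t0<..t}. (\<Prod>k\<in>{s<..t}. 1 + \<alpha> k * \<beta>) * cc Bs i s) + cc Bs i (Suc t)"
    using step.IH step.prems a0 beta by (intro add_right_mono mult_left_mono) auto
  also have "\<dots> = (\<Sum>s\<in>{t0<..Suc t}. (\<Prod>k\<in>{s<..Suc t}. 1 + \<alpha> k * \<beta>) * cc Bs i s)"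
  proof -
    have I: "{t0<..Suc t} = insert (Suc t) {t0<..t}" using step by auto
    have P: "(\<Prod>k\<in>{s<..Suc t}. 1 + \<alpha> k * \<beta>) = (1 + \<alpha> (Suc t) * \<beta>) * (\<Prod>k\<in>{s<..t}. 1 + \<alpha> k * \<beta>)"
      if "s \<in> {t0<..t}" for s
    proof -
      have "{s<..Suc t} = insert (Suc t) {s<..t}" using that by auto
      then show ?thesis by simp
    qed
    have "(\<Sum>s\<in>{t0<..Suc t}. (\<Prod>k\<in>{s<..Suc t}. 1 + \<alpha> k * \<beta>) * cc Bs i s)
        = cc Bs i (Suc t) + (\<Sum>s\<in>{t0<..t}. (\<Prod>k\<in>{s<..Suc t}. 1 + \<alpha> k * \<beta>) * cc Bs i s)"
      unfolding I by simp
    also have "(\<Sum>s\<in>{t0<..t}. (\<Prod>k\<in>{s<..Suc t}. 1 + \<alpha> k * \<beta>) * cc Bs i s)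
        = (1 + \<alpha> (Suc t) * \<beta>) * (\<Sum>s\<in>{t0<..t}. (\<Prod>k\<in>{s<..t}. 1 + \<alpha> k * \<beta>) * cc Bs i s)"
      by (simp add: sum_distrib_left P mult.assoc)
    finally show ?thesis by simp
  qed
  finally show ?case .
qed

lemma prod_le_Pq: "(\<Prod>k\<in>{s<..T}. 1 + \<alpha> k * \<beta>) \<le> Pq (\<beta> * c) T s"
  unfolding Pq_def
proof (rule prod_mono)
  fix k assume k: "k \<in> {s<..T}"
  then have k1: "1 \<le> k" by auto
  have "\<alpha> k * \<beta> \<le> (c / real k) * \<beta>" using step[OF k1] beta by (intro mult_right_mono) auto
  then show "0 \<le> 1 + \<alpha> k * \<beta> \<and> 1 + \<alpha> k * \<beta> \<le> 1 + \<beta> * c / real k"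
    using step[OF k1] beta by (auto simp: field_simps)
qed

lemma cc_le:
  assumes s: "1 \<le> s"
  shows "cc Bs i s \<le> c / real s * (2 * \<beta> * eps + (if i \<in> Bs s then 2 * L / real b else 0))"
proof -
  have e: "cc Bs i s = \<alpha> s * (2 * \<beta> * eps + (if i \<in> Bs s then 2 * L / real b else 0))"
    unfolding cc_def by (simp add: algebra_simps)
  have X: "0 \<le> 2 * \<beta> * eps + (if i \<in> Bs s then 2 * L / real b else 0)"
    using beta eps L by simp
  show ?thesis unfolding e using step[OF s] X by (intro mult_right_mono) auto
qed

lemma per_Bs:
  assumes Bs: "Bs \<in> BS" and SS: "\<forall>j. j \<noteq> i \<longrightarrow> S' j = S j" and t0: "t0 \<le> T"
  shows "min 1 (Lw * norm (W S Bs T - W S' Bs T))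
     \<le> (\<Sum>s\<in>{1..t0}. if i \<in> Bs s then 1 else 0)
       + Lw * (\<Sum>s\<in>{t0<..T}. Pq (\<beta> * c) T s * (c / real s * (2 * \<beta> * eps + (if i \<in> Bs s then 2 * L / real b else 0))))"
    (is "_ \<le> ?H + Lw * ?R")
proof -
  have Rnn: "?R \<ge> 0"
    using beta c eps L b by (intro sum_nonneg mult_nonneg_nonneg Pq_nonneg) auto
  show ?thesis
  proof (cases "\<exists>s\<in>{1..t0}. i \<in> Bs s")
    case True
    then obtain s where s: "s \<in> {1..t0}" "i \<in> Bs s" by blast
    have "1 \<le> ?H"
    proof -
      have "(if i \<in> Bs s then 1 else 0) \<le> ?H"
        by (rule member_le_sum[OF s(1)]) auto
      then show ?thesis using s by simp
    qed
    then show ?thesis using Rnn Lw by (smt (verit) mult_nonneg_nonneg)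
  next
    case False
    then have "W S Bs t0 = W S' Bs t0" using no_hit[OF Bs SS t0] by blast
    then have "norm (W S Bs T - W S' Bs T) \<le> (\<Sum>s\<in>{t0<..T}. (\<Prod>k\<in>{s<..T}. 1 + \<alpha> k * \<beta>) * cc Bs i s)"
      using unroll[OF Bs SS t0 order_refl] by blast
    also have "\<dots> \<le> ?R"
    proof (rule sum_mono)
      fix s assume "s \<in> {t0<..T}"
      then have s1: "1 \<le> s" by auto
      show "(\<Prod>k\<in>{s<..T}. 1 + \<alpha> k * \<beta>) * cc Bs i s
          \<le> Pq (\<beta> * c) T s * (c / real s * (2 * \<beta> * eps + (if i \<in> Bs s then 2 * L / real b else 0)))"
        using s1 beta c by (intro mult_mono prod_le_Pq cc_le cc_nonneg Pq_nonneg) auto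
    qed
    finally have "Lw * norm (W S Bs T - W S' Bs T) \<le> Lw * ?R" using Lw by (rule mult_left_mono)
    moreover have "?H \<ge> 0" by (intro sum_nonneg) auto
    ultimately show ?thesis by linarith
  qed
qed

end

lemma PiE_filter:
  assumes "t \<in> I"
  shows "{f \<in> PiE I F. P (f t)} = PiE I (\<lambda>s. if s = t then {x \<in> F t. P x} else F s)"
  using assms by (auto simp: PiE_iff extensional_def split: if_splits)

context vsetup
begin

abbreviation "FB \<equiv> {B. B \<subseteq> {..<n} \<and> card B = b}"

lemma BS_def': "BS = PiE {1..T} (\<lambda>_. FB)"
  unfolding batch_seqs_def ..

lemma finite_FB: "finite FB"
  by (rule finite_subset[of _ "Pow {..<n}"]) auto

lemma card_FB: "card FB = n choose b"
  using n_subsets[of "{..<n}" b] by simp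

lemma finite_BS: "finite BS"
  unfolding BS_def' by (intro finite_PiE finite_FB) auto

lemma card_BS: "card BS = (n choose b) ^ T"
  unfolding BS_def' by (simp add: card_PiE card_FB)

lemma card_BS_pos: "card BS > 0"
  unfolding card_BS using b by simp

lemma card_FB_hit:
  assumes i: "i < n"
  shows "card {B \<in> FB. i \<in> B} * n = b * card FB"
proof -
  have n0: "0 < n" and b0: "0 < b" using b by auto
  have split: "FB = {B \<in> FB. i \<in> B} \<union> {B. B \<subseteq> {..<n} - {i} \<and> card B = b}" by auto
  have disj: "{B \<in> FB. i \<in> B} \<inter> {B. B \<subseteq> {..<n} - {i} \<and> card B = b} = {}" by auto
  have f1: "finite {B \<in> FB. i \<in> B}" using finite_FB by simp
  have f2: "finite {B. B \<subseteq> {..<n} - {i} \<and> card B = b}"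
    by (rule finite_subset[of _ "Pow {..<n}"]) auto
  have c2: "card {B. B \<subseteq> {..<n} - {i} \<and> card B = b} = (n - 1) choose b"
    using n_subsets[of "{..<n} - {i}" b] i by simp
  have "card FB = card {B \<in> FB. i \<in> B} + card {B. B \<subseteq> {..<n} - {i} \<and> card B = b}"
    by (subst split) (rule card_Un_disjoint[OF f1 f2 disj])
  then have "card {B \<in> FB. i \<in> B} = (n choose b) - ((n - 1) choose b)"
    unfolding card_FB c2 by simp
  also have "\<dots> = (n - 1) choose (b - 1)"
    using choose_reduce_nat[OF n0 b0] by simp
  finally have "card {B \<in> FB. i \<in> B} * n = n * ((n - 1) choose (b - 1))" by simp
  also have "\<dots> = b * (n choose b)" using times_binomial_minus1_eq[OF b0, of n] by simp
  finally show ?thesis unfolding card_FB .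
qed

lemma hit_avg:
  assumes i: "i < n" and t: "t \<in> {1..T}"
  shows "(\<Sum>Bs\<in>BS. (if i \<in> Bs t then 1 else 0 :: real)) = real b / real n * real (card BS)"
proof -
  have n0: "real n > 0" using b by simp
  have "(\<Sum>Bs\<in>BS. (if i \<in> Bs t then 1 else 0 :: real)) = real (card {Bs \<in> BS. i \<in> Bs t})"
    using sum.inter_filter[OF finite_BS, of "\<lambda>_. 1::real" "\<lambda>Bs. i \<in> Bs t"] by simp
  also have "{Bs \<in> BS. i \<in> Bs t} = PiE {1..T} (\<lambda>s. if s = t then {B \<in> FB. i \<in> B} else FB)"
    unfolding BS_def' using PiE_filter[OF t, of "\<lambda>_. FB" "\<lambda>B. i \<in> B"] by simp
  also have "card (PiE {1..T} (\<lambda>s. if s = t then {B \<in> FB. i \<in> B} else FB))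
      = (\<Prod>s\<in>{1..T}. card (if s = t then {B \<in> FB. i \<in> B} else FB))"
    by (rule card_PiE) simp
  also have "\<dots> = card (if t = t then {B \<in> FB. i \<in> B} else FB) * (\<Prod>s\<in>{1..T} - {t}. card (if s = t then {B \<in> FB. i \<in> B} else FB))"
    by (rule prod.remove) (use t in auto)
  also have "(\<Prod>s\<in>{1..T} - {t}. card (if s = t then {B \<in> FB. i \<in> B} else FB)) = (\<Prod>s\<in>{1..T} - {t}. card FB)"
    by (rule prod.cong) auto
  finally have e1: "(\<Sum>Bs\<in>BS. (if i \<in> Bs t then 1 else 0 :: real)) = real (card {B \<in> FB. i \<in> B} * (\<Prod>s\<in>{1..T} - {t}. card FB))"
    by simp
  have "card BS = (\<Prod>s\<in>{1..T}. card FB)"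
    unfolding BS_def' by (rule card_PiE) simp
  also have "\<dots> = card FB * (\<Prod>s\<in>{1..T} - {t}. card FB)"
    by (rule prod.remove) (use t in auto)
  finally have e2: "card BS = card FB * (\<Prod>s\<in>{1..T} - {t}. card FB)" .
  define P where "P = (\<Prod>s\<in>{1..T} - {t}. card FB)"
  define cF where "cF = card {B \<in> FB. i \<in> B}"
  have "cF * P * n = (cF * n) * P" by (simp only: ac_simps)
  also have "\<dots> = b * card FB * P" unfolding cF_def using card_FB_hit[OF i] by simp
  also have "\<dots> = b * card BS" unfolding e2 P_def by (simp only: ac_simps)
  finally have nat_eq: "cF * P * n = b * card BS" .
  have "real (cF * P) * real n = real b * real (card BS)"
    unfolding of_nat_mult[symmetric] nat_eq ..
  then have "real (card {B \<in> FB. i \<in> B} * (\<Prod>s\<in>{1..T} - {t}. card FB)) * real n = real b * real (card BS)"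
    unfolding cF_def P_def .
  then show ?thesis unfolding e1 using n0 by (simp add: field_simps)
qed

definition RHS :: real where
  "RHS = real b / real n * (1 + 1 / (\<beta> * c))
             * ((2 * Lw * c / real b) * (eps * \<beta> * real n + L)) powr (1 / (\<beta> * c + 1))
             * real T powr ((\<beta> * c) / (\<beta> * c + 1))"

lemma avg_bound:
  assumes i: "i < n" and SS: "\<forall>j. j \<noteq> i \<longrightarrow> S' j = S j"
  shows "(\<Sum>Bs\<in>BS. min 1 (Lw * norm (W S Bs T - W S' Bs T))) / real (card BS) \<le> RHS"
proof -
  define q where "q = \<beta> * c"
  define K where "K = (2 * Lw * c / real b) * (eps * \<beta> * real n + L)"
  define a where "a = real b / real n"
  define N where "N = real (card BS)"
  have q: "q > 0" unfolding q_def using beta c by simp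
  have n0: "real n > 0" and b0: "real b > 0" using b by auto
  have K: "K \<ge> 0" unfolding K_def using Lw c b eps beta L by simp
  have N0: "N > 0" unfolding N_def using card_BS_pos by simp
  obtain t0 where t0: "t0 \<le> T" and t0b: "real t0 + K / q * (Pq q T t0 - 1)
            \<le> (1 + 1 / q) * (K powr (1 / (q + 1)) * real T powr (q / (q + 1)))"
    using choose_t0[OF q K, of T] by blast
  define Y where "Y Bs s = 2 * \<beta> * eps + (if i \<in> Bs s then 2 * L / real b else 0)" for Bs :: "nat \<Rightarrow> nat set" and s :: nat
  have "(\<Sum>Bs\<in>BS. min 1 (Lw * norm (W S Bs T - W S' Bs T)))
      \<le> (\<Sum>Bs\<in>BS. (\<Sum>s\<in>{1..t0}. if i \<in> Bs s then 1 else 0)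
            + Lw * (\<Sum>s\<in>{t0<..T}. Pq q T s * (c / real s * Y Bs s)))"
    unfolding q_def Y_def by (intro sum_mono per_Bs[OF _ SS t0])
  also have "\<dots> = (\<Sum>Bs\<in>BS. \<Sum>s\<in>{1..t0}. if i \<in> Bs s then 1 else 0)
       + Lw * (\<Sum>Bs\<in>BS. \<Sum>s\<in>{t0<..T}. Pq q T s * (c / real s * Y Bs s))"
    by (simp add: sum.distrib sum_distrib_left)
  also have "(\<Sum>Bs\<in>BS. \<Sum>s\<in>{1..t0}. if i \<in> Bs s then 1 else 0) = (\<Sum>s\<in>{1..t0}. \<Sum>Bs\<in>BS. if i \<in> Bs s then 1 else (0::real))"
    by (rule sum.swap)
  also have "(\<Sum>Bs\<in>BS. \<Sum>s\<in>{t0<..T}. Pq q T s * (c / real s * Y Bs s))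
      = (\<Sum>s\<in>{t0<..T}. \<Sum>Bs\<in>BS. Pq q T s * (c / real s * Y Bs s))"
    by (rule sum.swap)
  also have "\<dots> = (\<Sum>s\<in>{t0<..T}. Pq q T s * (c / real s) * (\<Sum>Bs\<in>BS. Y Bs s))"
    by (simp add: sum_distrib_left mult.assoc)
  also have "(\<Sum>s\<in>{1..t0}. \<Sum>Bs\<in>BS. if i \<in> Bs s then 1 else 0) = real t0 * (a * N)"
  proof -
    have "(\<Sum>s\<in>{1..t0}. \<Sum>Bs\<in>BS. if i \<in> Bs s then 1 else (0::real)) = (\<Sum>s\<in>{1..t0}. a * N)"
      using t0 by (intro sum.cong refl) (simp add: hit_avg[OF i] a_def N_def)
    then show ?thesis by simp
  qed
  also have "(\<Sum>s\<in>{t0<..T}. Pq q T s * (c / real s) * (\<Sum>Bs\<in>BS. Y Bs s))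
      = (\<Sum>s\<in>{t0<..T}. Pq q T s / real s) * (c * N * (2 * \<beta> * eps + 2 * L / real b * a))"
  proof -
    have "(\<Sum>Bs\<in>BS. Y Bs s) = N * (2 * \<beta> * eps + 2 * L / real b * a)"
      if s: "s \<in> {t0<..T}" for s
    proof -
      have s': "s \<in> {1..T}" using s by auto
      have "(\<Sum>Bs\<in>BS. (if i \<in> Bs s then 2 * L / real b else 0)) = 2 * L / real b * (\<Sum>Bs\<in>BS. (if i \<in> Bs s then 1 else 0))"
        by (simp add: sum_distrib_left if_distrib cong: if_cong)
      also have "\<dots> = 2 * L / real b * (a * N)" unfolding hit_avg[OF i s'] a_def N_def ..
      finally show ?thesis unfolding Y_def by (simp add: sum.distrib N_def algebra_simps)
    qed
    then have "(\<Sum>s\<in>{t0<..T}. Pq q T s * (c / real s) * (\<Sum>Bs\<in>BS. Y Bs s))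
        = (\<Sum>s\<in>{t0<..T}. Pq q T s / real s * (c * N * (2 * \<beta> * eps + 2 * L / real b * a)))"
      by (intro sum.cong refl) (simp add: field_simps)
    then show ?thesis by (simp add: sum_distrib_right)
  qed
  also have "(\<Sum>s\<in>{t0<..T}. Pq q T s / real s) = (Pq q T t0 - 1) / q"
    using Pq_telescope[OF t0, of q] q by (simp add: field_simps)
  finally have main: "(\<Sum>Bs\<in>BS. min 1 (Lw * norm (W S Bs T - W S' Bs T)))
      \<le> real t0 * (a * N) + Lw * ((Pq q T t0 - 1) / q * (c * N * (2 * \<beta> * eps + 2 * L / real b * a)))" .
  have eqK: "Lw * ((Pq q T t0 - 1) / q * (c * N * (2 * \<beta> * eps + 2 * L / real b * a)))
        = N * a * (K / q * (Pq q T t0 - 1))"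
    unfolding K_def a_def q_def using n0 b0 beta c by (simp add: field_simps)
  have "(\<Sum>Bs\<in>BS. min 1 (Lw * norm (W S Bs T - W S' Bs T))) / N \<le> a * (real t0 + K / q * (Pq q T t0 - 1))"
    using main unfolding eqK using N0 by (simp add: pos_divide_le_eq field_simps)
  also have "\<dots> \<le> a * ((1 + 1 / q) * (K powr (1 / (q + 1)) * real T powr (q / (q + 1))))"
    using t0b n0 b0 unfolding a_def by (intro mult_left_mono) auto
  also have "\<dots> = RHS" unfolding RHS_def a_def q_def K_def by (simp add: mult.assoc)
  finally show ?thesis unfolding N_def .
qed

lemma hmax_diff_le: "hmax h eps w z - hmax h eps w' z \<le> min 1 (Lw * norm (w - w'))"
  using hmax_lip[of w z w'] hmax_range[of w z] hmax_range[of w' z] by (simp add: abs_le_iff)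

lemma stab:
  assumes i: "i < n" and SS: "\<forall>j. j \<noteq> i \<longrightarrow> S' j = S j"
  shows "(\<Sum>Bs\<in>BS. hmax h eps (W S Bs T) z - hmax h eps (W S' Bs T) z) / real (card BS) \<le> RHS"
proof -
  have "(\<Sum>Bs\<in>BS. hmax h eps (W S Bs T) z - hmax h eps (W S' Bs T) z) \<le> (\<Sum>Bs\<in>BS. min 1 (Lw * norm (W S Bs T - W S' Bs T)))"
    by (intro sum_mono hmax_diff_le)
  then have "(\<Sum>Bs\<in>BS. hmax h eps (W S Bs T) z - hmax h eps (W S' Bs T) z) / real (card BS)
      \<le> (\<Sum>Bs\<in>BS. min 1 (Lw * norm (W S Bs T - W S' Bs T))) / real (card BS)"
    using card_BS_pos by (intro divide_right_mono) auto
  also have "\<dots> \<le> RHS" by (rule avg_bound[OF i SS])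
  finally show ?thesis .
qed

end

lemma distr_upd:
  fixes D :: "'z measure" and I :: "'i set"
  assumes D: "prob_space D" and fin: "finite I" and j: "j \<in> I"
  shows "distr (PiM I (\<lambda>_. D) \<Otimes>\<^sub>M D) (PiM I (\<lambda>_. D)) (\<lambda>x. (fst x)(j := snd x)) = PiM I (\<lambda>_. D)"
proof -
  interpret D: prob_space D by fact
  have sf: "sigma_finite_measure D" by (rule prob_space_imp_sigma_finite[OF D])
  interpret P: product_sigma_finite "\<lambda>_::'i. D" by (rule product_sigma_finite.intro) (rule sf)
  interpret PS: pair_sigma_finite "PiM I (\<lambda>_. D)" D
    by (intro pair_sigma_finite.intro P.sigma_finite[OF fin] sf)
  have feq: "(\<lambda>x. (fst x)(j := snd x)) = (\<lambda>x i. if i = j then snd x else fst x i)"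
    by (auto simp: fun_eq_iff)
  have meas: "(\<lambda>x. (fst x)(j := snd x)) \<in> measurable (PiM I (\<lambda>_. D) \<Otimes>\<^sub>M D) (PiM I (\<lambda>_. D))"
    unfolding feq
  proof (rule measurable_PiM_single')
    fix i assume i: "i \<in> I"
    show "(\<lambda>x. if i = j then snd x else fst x i) \<in> measurable (PiM I (\<lambda>_. D) \<Otimes>\<^sub>M D) D"
    proof (cases "i = j")
      case True
      then show ?thesis by simp
    next
      case False
      have "(\<lambda>x. fst x i) \<in> measurable (PiM I (\<lambda>_. D) \<Otimes>\<^sub>M D) D"
        using i by measurable
      then show ?thesis using False by simp
    qed
  next
    show "(\<lambda>x i. if i = j then snd x else fst x i) \<in> space (PiM I (\<lambda>_. D) \<Otimes>\<^sub>M D) \<rightarrow> (\<Pi>\<^sub>E i\<in>I. space D)"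
      using j by (auto simp: space_pair_measure space_PiM PiE_iff extensional_def)
  qed
  show ?thesis
  proof (rule P.PiM_eqI[OF fin])
    show "sets (distr (PiM I (\<lambda>_. D) \<Otimes>\<^sub>M D) (PiM I (\<lambda>_. D)) (\<lambda>x. (fst x)(j := snd x))) = sets (PiM I (\<lambda>_. D))"
      by simp
  next
    fix A assume A: "\<And>i. i \<in> I \<Longrightarrow> A i \<in> sets D"
    have sub: "\<And>i. i \<in> I \<Longrightarrow> A i \<subseteq> space D" using A sets.sets_into_space by blast
    have Aj: "(A(j := space D)) i \<in> sets D" if "i \<in> I" for i using A that by auto
    have pre: "(\<lambda>x. (fst x)(j := snd x)) -` PiE I A \<inter> space (PiM I (\<lambda>_. D) \<Otimes>\<^sub>M D)
        = PiE I (A(j := space D)) \<times> A j"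
    proof (rule set_eqI)
      fix x :: "('i \<Rightarrow> 'z) \<times> 'z"
      obtain S z where x: "x = (S, z)" by fastforce
      show "x \<in> (\<lambda>x. (fst x)(j := snd x)) -` PiE I A \<inter> space (PiM I (\<lambda>_. D) \<Otimes>\<^sub>M D) \<longleftrightarrow> x \<in> PiE I (A(j := space D)) \<times> A j"
        unfolding x using j sub by (auto simp: space_pair_measure space_PiM PiE_iff extensional_def split: if_splits)
    qed
    have PA: "PiE I A \<in> sets (PiM I (\<lambda>_. D))" using A fin by (intro sets_PiM_I_finite) auto
    have PA': "PiE I (A(j := space D)) \<in> sets (PiM I (\<lambda>_. D))" using Aj fin by (intro sets_PiM_I_finite) auto
    have "emeasure (distr (PiM I (\<lambda>_. D) \<Otimes>\<^sub>M D) (PiM I (\<lambda>_. D)) (\<lambda>x. (fst x)(j := snd x))) (PiE I A)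
        = emeasure (PiM I (\<lambda>_. D) \<Otimes>\<^sub>M D) (PiE I (A(j := space D)) \<times> A j)"
      using emeasure_distr[OF meas PA] pre by simp
    also have "\<dots> = emeasure (PiM I (\<lambda>_. D)) (PiE I (A(j := space D))) * emeasure D (A j)"
      by (rule D.emeasure_pair_measure_Times[OF PA' A[OF j]])
    also have "emeasure (PiM I (\<lambda>_. D)) (PiE I (A(j := space D))) = (\<Prod>i\<in>I. emeasure D ((A(j := space D)) i))"
      by (rule P.emeasure_PiM[OF fin Aj])
    also have "\<dots> = emeasure D ((A(j := space D)) j) * (\<Prod>i\<in>I - {j}. emeasure D ((A(j := space D)) i))"
      by (rule prod.remove[OF fin j])
    also have "(\<Prod>i\<in>I - {j}. emeasure D ((A(j := space D)) i)) = (\<Prod>i\<in>I - {j}. emeasure D (A i))"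
      by (rule prod.cong) auto
    also have "emeasure D ((A(j := space D)) j) = 1" by (simp add: D.emeasure_space_1)
    also have "1 * (\<Prod>i\<in>I - {j}. emeasure D (A i)) * emeasure D (A j) = (\<Prod>i\<in>I. emeasure D (A i))"
      using prod.remove[OF fin j, of "\<lambda>i. emeasure D (A i)"] by (simp add: mult.commute)
    finally show "emeasure (distr (PiM I (\<lambda>_. D) \<Otimes>\<^sub>M D) (PiM I (\<lambda>_. D)) (\<lambda>x. (fst x)(j := snd x))) (PiE I A)
        = (\<Prod>i\<in>I. emeasure D (A i))" .
  qed
qed


context vsetup
begin

definition hc :: "'w \<Rightarrow> 'd \<Rightarrow> 'z \<Rightarrow> real" where
  "hc w \<delta> z = h w (closest_point (cball 0 eps) \<delta>) z"

lemma cp_in: "closest_point (cball 0 eps) \<delta> \<in> cball 0 eps"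
  by (rule closest_point_in_set) (use eps in auto)

lemma hc_eq: "\<delta> \<in> cball 0 eps \<Longrightarrow> hc w \<delta> z = h w \<delta> z"
  unfolding hc_def by (simp add: closest_point_self)

lemma hc_lip: "dist (hc (fst p) (snd p) z) (hc (fst p') (snd p') z) \<le> L * dist p p'"
proof -
  define cp where "cp = closest_point (cball 0 eps :: 'd set)"
  have "dist (hc (fst p) (snd p) z) (hc (fst p') (snd p') z) = \<bar>h (fst p) (cp (snd p)) z - h (fst p') (cp (snd p')) z\<bar>"
    unfolding hc_def cp_def by (simp add: dist_real_def)
  also have "\<dots> \<le> L * sqrt ((norm (fst p - fst p'))\<^sup>2 + (norm (cp (snd p) - cp (snd p')))\<^sup>2)"
    unfolding cp_def by (rule h_lip_L[OF cp_in cp_in])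
  also have "\<dots> \<le> L * sqrt ((norm (fst p - fst p'))\<^sup>2 + (norm (snd p - snd p'))\<^sup>2)"
  proof -
    have "dist (cp (snd p)) (cp (snd p')) \<le> dist (snd p) (snd p')"
      unfolding cp_def by (rule closest_point_lipschitz) (use eps in auto)
    then have "norm (cp (snd p) - cp (snd p')) \<le> norm (snd p - snd p')" by (simp add: dist_norm)
    then have "(norm (cp (snd p) - cp (snd p')))\<^sup>2 \<le> (norm (snd p - snd p'))\<^sup>2"
      by (rule power_mono) simp
    then show ?thesis using L by (intro mult_left_mono real_sqrt_le_mono) auto
  qed
  also have "sqrt ((norm (fst p - fst p'))\<^sup>2 + (norm (snd p - snd p'))\<^sup>2) = dist p p'"
  proof -
    obtain a d a' d' where "p = (a, d)" "p' = (a', d')" by fastforce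
    then show ?thesis by (simp add: dist_norm norm_Pair)
  qed
  finally show ?thesis .
qed

lemma hc_cont: "continuous_on UNIV (\<lambda>p. hc (fst p) (snd p) z)"
proof (rule lipschitz_on_continuous_on)
  show "L-lipschitz_on UNIV (\<lambda>p. hc (fst p) (snd p) z)"
    by (rule lipschitz_onI) (use hc_lip L in auto)
qed

lemma Hm: "(\<lambda>x. hc (fst (fst x)) (snd (fst x)) (snd x)) \<in> borel_measurable ((borel :: ('w \<times> 'd) measure) \<Otimes>\<^sub>M D)"
proof -
  have "(\<lambda>x. (\<lambda>p z. hc (fst p) (snd p) z) (fst x) (snd x)) \<in> borel_measurable ((borel :: ('w \<times> 'd) measure) \<Otimes>\<^sub>M D)"
  proof (rule caratheodory_measurable)
    fix p :: "'w \<times> 'd"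
    show "(\<lambda>z. hc (fst p) (snd p) z) \<in> borel_measurable D"
      unfolding hc_def by (rule meas_h)
  next
    fix z show "continuous_on UNIV (\<lambda>p. hc (fst p) (snd p) z)" by (rule hc_cont)
  qed
  then show ?thesis by simp
qed

lemma hc_comp:
  assumes u: "u \<in> borel_measurable ((borel :: 'w measure) \<Otimes>\<^sub>M D)"
  shows "(\<lambda>x. hc (u x) (sel (fst x) (snd x)) (snd x)) \<in> borel_measurable ((borel :: 'w measure) \<Otimes>\<^sub>M D)"
proof -
  have p1: "(\<lambda>x. (u x, sel (fst x) (snd x))) \<in> measurable (borel \<Otimes>\<^sub>M D) (borel :: ('w \<times> 'd) measure)"
  proof -
    have "(\<lambda>x. (u x, sel (fst x) (snd x))) \<in> measurable (borel \<Otimes>\<^sub>M D) (borel \<Otimes>\<^sub>M borel)"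
      by (rule measurable_Pair[OF u meas_sel])
    then show ?thesis by (simp add: borel_prod)
  qed
  have p2: "(\<lambda>x. ((u x, sel (fst x) (snd x)), snd x)) \<in> measurable (borel \<Otimes>\<^sub>M D) ((borel :: ('w \<times> 'd) measure) \<Otimes>\<^sub>M D)"
    by (rule measurable_Pair[OF p1 measurable_snd])
  show ?thesis
    using measurable_comp[OF p2 Hm] by (simp add: comp_def)
qed

lemma hmax_meas: "(\<lambda>x. hmax h eps (fst x) (snd x)) \<in> borel_measurable ((borel :: 'w measure) \<Otimes>\<^sub>M D)"
proof -
  have "(\<lambda>x. hc (fst x) (sel (fst x) (snd x)) (snd x)) \<in> borel_measurable ((borel :: 'w measure) \<Otimes>\<^sub>M D)"
    by (rule hc_comp[OF measurable_fst])
  moreover have "hc (fst x) (sel (fst x) (snd x)) (snd x) = hmax h eps (fst x) (snd x)" for x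
    by (simp add: hc_eq[OF sel_in] hmax_eq)
  ultimately show ?thesis by simp
qed

lemma G_meas: "(\<lambda>x. grad_w h (fst x) (sel (fst x) (snd x)) (snd x)) \<in> borel_measurable ((borel :: 'w measure) \<Otimes>\<^sub>M D)"
proof (subst borel_measurable_euclidean_space, intro ballI)
  fix i :: 'w assume i: "i \<in> Basis"
  define u where "u m x = (hc (fst x + (1 / real (Suc m)) *\<^sub>R i) (sel (fst x) (snd x)) (snd x)
                           - hc (fst x) (sel (fst x) (snd x)) (snd x)) * real (Suc m)" for m x
  show "(\<lambda>x. grad_w h (fst x) (sel (fst x) (snd x)) (snd x) \<bullet> i) \<in> borel_measurable (borel \<Otimes>\<^sub>M D)"
  proof (rule borel_measurable_LIMSEQ_real[where u=u])
    fix x :: "'w \<times> 'z"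
    assume "x \<in> space (borel \<Otimes>\<^sub>M D)"
    have "(\<lambda>m. (h (fst x + (1 / real (Suc m)) *\<^sub>R i) (sel (fst x) (snd x)) (snd x) - h (fst x) (sel (fst x) (snd x)) (snd x)) * real (Suc m))
        \<longlonglongrightarrow> i \<bullet> grad_w h (fst x) (sel (fst x) (snd x)) (snd x)"
      by (rule grad_lim[OF sel_in])
    then show "(\<lambda>m. u m x) \<longlonglongrightarrow> grad_w h (fst x) (sel (fst x) (snd x)) (snd x) \<bullet> i"
      unfolding u_def by (simp add: hc_eq[OF sel_in] inner_commute)
  next
    fix m
    have a: "(\<lambda>x. hc (fst x + (1 / real (Suc m)) *\<^sub>R i) (sel (fst x) (snd x)) (snd x)) \<in> borel_measurable ((borel :: 'w measure) \<Otimes>\<^sub>M D)"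
      by (rule hc_comp) measurable
    have b: "(\<lambda>x. hc (fst x) (sel (fst x) (snd x)) (snd x)) \<in> borel_measurable ((borel :: 'w measure) \<Otimes>\<^sub>M D)"
      by (rule hc_comp[OF measurable_fst])
    show "u m \<in> borel_measurable (borel \<Otimes>\<^sub>M D)"
      unfolding u_def using a b by measurable
  qed
qed

abbreviation "\<Omega> \<equiv> PiM {..<n} (\<lambda>_. D)"

lemma W_meas: "Bs \<in> BS \<Longrightarrow> t \<le> T \<Longrightarrow> (\<lambda>S. W S Bs t) \<in> borel_measurable \<Omega>"
proof (induction t)
  case 0
  then show ?case by simp
next
  case (Suc t)
  then have IH: "(\<lambda>S. W S Bs t) \<in> borel_measurable \<Omega>" by simp
  have B: "Bs (Suc t) \<subseteq> {..<n}" using BS_elem[OF Suc.prems(1), of "Suc t"] Suc.prems by auto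
  have g: "(\<lambda>S. grad_w h (W S Bs t) (sel (W S Bs t) (S j)) (S j)) \<in> borel_measurable \<Omega>"
    if j: "j \<in> Bs (Suc t)" for j
  proof -
    have jn: "j \<in> {..<n}" using j B by auto
    have p: "(\<lambda>S. (W S Bs t, S j)) \<in> measurable \<Omega> ((borel :: 'w measure) \<Otimes>\<^sub>M D)"
      by (rule measurable_Pair[OF IH measurable_component_singleton[OF jn]])
    show ?thesis using measurable_comp[OF p G_meas] by (simp add: comp_def)
  qed
  have "(\<lambda>S. W S Bs t - (\<alpha> (Suc t) / real b) *\<^sub>R (\<Sum>j\<in>Bs (Suc t). grad_w h (W S Bs t) (sel (W S Bs t) (S j)) (S j)))
        \<in> borel_measurable \<Omega>"
    by (intro borel_measurable_diff IH borel_measurable_scaleR borel_measurable_const borel_measurable_sum g)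
  then show ?case by (simp add: Let_def)
qed

lemma adv_meas: "(\<lambda>w. adv_risk D h eps w) \<in> borel_measurable (borel :: 'w measure)"
proof -
  interpret D: prob_space D by (rule D)
  have "case_prod (\<lambda>w z. hmax h eps w z) \<in> borel_measurable ((borel :: 'w measure) \<Otimes>\<^sub>M D)"
    using hmax_meas by (simp add: case_prod_beta')
  then have "(\<lambda>w. \<integral>z. hmax h eps w z \<partial>D) \<in> borel_measurable (borel :: 'w measure)"
    by (rule D.borel_measurable_lebesgue_integral)
  then show ?thesis unfolding adv_risk_def .
qed

end

lemma upd_meas_gen:
  fixes D :: "'z measure" and I :: "'i set"
  assumes j: "j \<in> I"
  shows "(\<lambda>x. (fst x)(j := snd x)) \<in> measurable (PiM I (\<lambda>_. D) \<Otimes>\<^sub>M D) (PiM I (\<lambda>_. D))"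
proof -
  have feq: "(\<lambda>x. (fst x)(j := snd x)) = (\<lambda>x i. if i = j then snd x else fst x i)"
    by (auto simp: fun_eq_iff)
  show ?thesis
    unfolding feq
  proof (rule measurable_PiM_single')
    fix i assume i: "i \<in> I"
    show "(\<lambda>x. if i = j then snd x else fst x i) \<in> measurable (PiM I (\<lambda>_. D) \<Otimes>\<^sub>M D) D"
    proof (cases "i = j")
      case True
      then show ?thesis by simp
    next
      case False
      have "(\<lambda>x. fst x i) \<in> measurable (PiM I (\<lambda>_. D) \<Otimes>\<^sub>M D) D"
        using i by measurable
      then show ?thesis using False by simp
    qed
  next
    show "(\<lambda>x i. if i = j then snd x else fst x i) \<in> space (PiM I (\<lambda>_. D) \<Otimes>\<^sub>M D) \<rightarrow> (\<Pi>\<^sub>E i\<in>I. space D)"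
      using j by (auto simp: space_pair_measure space_PiM PiE_iff extensional_def)
  qed
qed

context vsetup
begin

lemma upd_meas:
  assumes j: "j < n"
  shows "(\<lambda>x. (fst x)(j := snd x)) \<in> measurable (\<Omega> \<Otimes>\<^sub>M D) \<Omega>"
  by (rule upd_meas_gen) (use j in simp)

lemma hmax_abs: "\<bar>hmax h eps w z\<bar> \<le> 1"
  using hmax_range[of w z] by (simp add: abs_le_iff)

lemma probO: "prob_space \<Omega>"
  by (rule prob_space_PiM) (simp add: D)

lemma diff_integral:
  assumes Bs: "Bs \<in> BS" and j: "j < n"
  shows "integrable \<Omega> (\<lambda>S. adv_risk D h eps (W S Bs T))"
    and "integrable \<Omega> (\<lambda>S. hmax h eps (W S Bs T) (S j))"
    and "integrable (\<Omega> \<Otimes>\<^sub>M D) (\<lambda>x. hmax h eps (W (fst x) Bs T) (snd x) - hmax h eps (W ((fst x)(j := snd x)) Bs T) (snd x))"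
    and "(\<integral>S. adv_risk D h eps (W S Bs T) \<partial>\<Omega>) - (\<integral>S. hmax h eps (W S Bs T) (S j) \<partial>\<Omega>)
         = (\<integral>x. hmax h eps (W (fst x) Bs T) (snd x) - hmax h eps (W ((fst x)(j := snd x)) Bs T) (snd x) \<partial>(\<Omega> \<Otimes>\<^sub>M D))"
proof -
  interpret D: prob_space D by (rule D)
  interpret O: prob_space \<Omega> by (rule probO)
  interpret PS: pair_sigma_finite \<Omega> D
    by (intro pair_sigma_finite.intro prob_space_imp_sigma_finite probO D)
  interpret PM: prob_space "\<Omega> \<Otimes>\<^sub>M D" by (rule prob_space_pair[OF probO D])
  have mW: "(\<lambda>S. W S Bs T) \<in> borel_measurable \<Omega>" by (rule W_meas[OF Bs order_refl])
  have jn: "j \<in> {..<n}" using j by simp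
  define f1 where "f1 x = hmax h eps (W (fst x) Bs T) (snd x)" for x
  define f2 where "f2 x = hmax h eps (W ((fst x)(j := snd x)) Bs T) (snd x)" for x
  have mf1: "f1 \<in> borel_measurable (\<Omega> \<Otimes>\<^sub>M D)"
  proof -
    have p: "(\<lambda>x. (W (fst x) Bs T, snd x)) \<in> measurable (\<Omega> \<Otimes>\<^sub>M D) ((borel :: 'w measure) \<Otimes>\<^sub>M D)"
      by (rule measurable_Pair[OF measurable_comp[OF measurable_fst mW, unfolded comp_def] measurable_snd])
    show ?thesis using measurable_comp[OF p hmax_meas] unfolding f1_def by (simp add: comp_def)
  qed
  have mE: "(\<lambda>S. hmax h eps (W S Bs T) (S j)) \<in> borel_measurable \<Omega>"
  proof -
    have p: "(\<lambda>S. (W S Bs T, S j)) \<in> measurable \<Omega> ((borel :: 'w measure) \<Otimes>\<^sub>M D)"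
      by (rule measurable_Pair[OF mW measurable_component_singleton[OF jn]])
    show ?thesis using measurable_comp[OF p hmax_meas] by (simp add: comp_def)
  qed
  have mf2: "f2 \<in> borel_measurable (\<Omega> \<Otimes>\<^sub>M D)"
  proof -
    have "(\<lambda>x. hmax h eps (W ((fst x)(j := snd x)) Bs T) (((fst x)(j := snd x)) j)) \<in> borel_measurable (\<Omega> \<Otimes>\<^sub>M D)"
      using measurable_comp[OF upd_meas[OF j] mE] by (simp add: comp_def)
    then show ?thesis unfolding f2_def by simp
  qed
  have if1: "integrable (\<Omega> \<Otimes>\<^sub>M D) f1"
    by (rule PM.integrable_const_bound[where B=1, OF AE_I2 mf1]) (simp add: f1_def hmax_abs)
  have if2: "integrable (\<Omega> \<Otimes>\<^sub>M D) f2"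
    by (rule PM.integrable_const_bound[where B=1, OF AE_I2 mf2]) (simp add: f2_def hmax_abs)
  have iE: "integrable \<Omega> (\<lambda>S. hmax h eps (W S Bs T) (S j))"
    by (rule O.integrable_const_bound[where B=1, OF AE_I2 mE]) (simp add: hmax_abs)
  have A_eq: "(\<lambda>S. adv_risk D h eps (W S Bs T)) = (\<lambda>S. \<integral>z. f1 (S, z) \<partial>D)"
    unfolding adv_risk_def f1_def by simp
  have iA: "integrable \<Omega> (\<lambda>S. adv_risk D h eps (W S Bs T))"
    unfolding A_eq by (rule PS.integrable_fst'[OF if1])
  have IA: "(\<integral>S. adv_risk D h eps (W S Bs T) \<partial>\<Omega>) = integral\<^sup>L (\<Omega> \<Otimes>\<^sub>M D) f1"
    unfolding A_eq by (rule PS.integral_fst'[OF if1])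
  have IE: "(\<integral>S. hmax h eps (W S Bs T) (S j) \<partial>\<Omega>) = integral\<^sup>L (\<Omega> \<Otimes>\<^sub>M D) f2"
  proof -
    have "(\<integral>S. hmax h eps (W S Bs T) (S j) \<partial>\<Omega>)
        = integral\<^sup>L (distr (\<Omega> \<Otimes>\<^sub>M D) \<Omega> (\<lambda>x. (fst x)(j := snd x))) (\<lambda>S. hmax h eps (W S Bs T) (S j))"
      using distr_upd[OF D finite_lessThan jn] by simp
    also have "\<dots> = (\<integral>x. hmax h eps (W ((fst x)(j := snd x)) Bs T) (((fst x)(j := snd x)) j) \<partial>(\<Omega> \<Otimes>\<^sub>M D))"
      by (rule integral_distr[OF upd_meas[OF j] mE])
    also have "\<dots> = integral\<^sup>L (\<Omega> \<Otimes>\<^sub>M D) f2" unfolding f2_def by simp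
    finally show ?thesis .
  qed
  show "integrable \<Omega> (\<lambda>S. adv_risk D h eps (W S Bs T))" by (rule iA)
  show "integrable \<Omega> (\<lambda>S. hmax h eps (W S Bs T) (S j))" by (rule iE)
  show "integrable (\<Omega> \<Otimes>\<^sub>M D) (\<lambda>x. hmax h eps (W (fst x) Bs T) (snd x) - hmax h eps (W ((fst x)(j := snd x)) Bs T) (snd x))"
    using Bochner_Integration.integrable_diff[OF if1 if2] unfolding f1_def f2_def .
  show "(\<integral>S. adv_risk D h eps (W S Bs T) \<partial>\<Omega>) - (\<integral>S. hmax h eps (W S Bs T) (S j) \<partial>\<Omega>)
         = (\<integral>x. hmax h eps (W (fst x) Bs T) (snd x) - hmax h eps (W ((fst x)(j := snd x)) Bs T) (snd x) \<partial>(\<Omega> \<Otimes>\<^sub>M D))"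
  proof -
    have "integral\<^sup>L (\<Omega> \<Otimes>\<^sub>M D) (\<lambda>x. f1 x - f2 x) = integral\<^sup>L (\<Omega> \<Otimes>\<^sub>M D) f1 - integral\<^sup>L (\<Omega> \<Otimes>\<^sub>M D) f2"
      by (rule Bochner_Integration.integral_diff[OF if1 if2])
    then show ?thesis using IA IE unfolding f1_def f2_def by simp
  qed
qed

end

context vsetup
begin

theorem main: "gen_err_vanilla D h eps sel \<alpha> b w0 n T \<le> RHS"
proof -
  interpret O: prob_space \<Omega> by (rule probO)
  interpret PM: prob_space "\<Omega> \<Otimes>\<^sub>M D" by (rule prob_space_pair[OF probO D])
  define N where "N = real (card BS)"
  have N0: "N > 0" unfolding N_def using card_BS_pos by simp
  have n0: "real n > 0" using b by simp
  define A where "A Bs S = adv_risk D h eps (W S Bs T)" for Bs S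
  define E where "E Bs j S = hmax h eps (W S Bs T) (S j)" for Bs and j :: nat and S
  define F where "F Bs j x = hmax h eps (W (fst x) Bs T) (snd x) - hmax h eps (W ((fst x)(j := snd x)) Bs T) (snd x)"
    for Bs and j :: nat and x
  have iA: "integrable \<Omega> (A Bs)" if "Bs \<in> BS" for Bs
    unfolding A_def using diff_integral(1)[OF that, of 0] b by simp
  have iE: "integrable \<Omega> (E Bs j)" if "Bs \<in> BS" "j \<in> {..<n}" for Bs j
    unfolding E_def using diff_integral(2)[OF that(1), of j] that(2) by simp
  have iF: "integrable (\<Omega> \<Otimes>\<^sub>M D) (F Bs j)" if "Bs \<in> BS" "j \<in> {..<n}" for Bs j
    unfolding F_def using diff_integral(3)[OF that(1), of j] that(2) by simp
  have dI: "integral\<^sup>L \<Omega> (A Bs) - integral\<^sup>L \<Omega> (E Bs j) = integral\<^sup>L (\<Omega> \<Otimes>\<^sub>M D) (F Bs j)"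
    if "Bs \<in> BS" "j \<in> {..<n}" for Bs j
    unfolding A_def E_def F_def using diff_integral(4)[OF that(1), of j] that(2) by simp
  have iAE: "integrable \<Omega> (\<lambda>S. A Bs S - (\<Sum>j<n. E Bs j S) / real n)" if "Bs \<in> BS" for Bs
    using iA[OF that] iE[OF that] by (intro Bochner_Integration.integrable_diff integrable_divide_zero Bochner_Integration.integrable_sum) auto
  have "gen_err_vanilla D h eps sel \<alpha> b w0 n T
      = (\<integral>S. (\<Sum>Bs\<in>BS. A Bs S - (\<Sum>j<n. E Bs j S) / real n) / N \<partial>\<Omega>)"
    unfolding gen_err_vanilla_def emp_adv_risk_def A_def E_def N_def Let_def ..
  also have "\<dots> = (\<integral>S. (\<Sum>Bs\<in>BS. A Bs S - (\<Sum>j<n. E Bs j S) / real n) \<partial>\<Omega>) / N"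
    by (rule integral_divide_zero)
  also have "(\<integral>S. (\<Sum>Bs\<in>BS. A Bs S - (\<Sum>j<n. E Bs j S) / real n) \<partial>\<Omega>)
      = (\<Sum>Bs\<in>BS. (\<integral>S. A Bs S - (\<Sum>j<n. E Bs j S) / real n \<partial>\<Omega>))"
    by (rule Bochner_Integration.integral_sum) (rule iAE)
  also have "\<dots> = (\<Sum>Bs\<in>BS. (\<Sum>j<n. integral\<^sup>L (\<Omega> \<Otimes>\<^sub>M D) (F Bs j)) / real n)"
  proof (rule sum.cong[OF refl])
    fix Bs assume Bs: "Bs \<in> BS"
    have "(\<integral>S. A Bs S - (\<Sum>j<n. E Bs j S) / real n \<partial>\<Omega>) = integral\<^sup>L \<Omega> (A Bs) - (\<integral>S. (\<Sum>j<n. E Bs j S) / real n \<partial>\<Omega>)"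
      by (rule Bochner_Integration.integral_diff[OF iA[OF Bs]])
         (use iE[OF Bs] in \<open>intro integrable_divide_zero Bochner_Integration.integrable_sum, auto\<close>)
    also have "(\<integral>S. (\<Sum>j<n. E Bs j S) / real n \<partial>\<Omega>) = (\<integral>S. (\<Sum>j<n. E Bs j S) \<partial>\<Omega>) / real n"
      by (rule integral_divide_zero)
    also have "(\<integral>S. (\<Sum>j<n. E Bs j S) \<partial>\<Omega>) = (\<Sum>j<n. integral\<^sup>L \<Omega> (E Bs j))"
      by (rule Bochner_Integration.integral_sum) (rule iE[OF Bs])
    also have "integral\<^sup>L \<Omega> (A Bs) - (\<Sum>j<n. integral\<^sup>L \<Omega> (E Bs j)) / real n
        = (\<Sum>j<n. integral\<^sup>L \<Omega> (A Bs) - integral\<^sup>L \<Omega> (E Bs j)) / real n"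
      using n0 by (simp add: sum_subtractf field_simps)
    also have "(\<Sum>j<n. integral\<^sup>L \<Omega> (A Bs) - integral\<^sup>L \<Omega> (E Bs j)) = (\<Sum>j<n. integral\<^sup>L (\<Omega> \<Otimes>\<^sub>M D) (F Bs j))"
      by (rule sum.cong[OF refl]) (rule dI[OF Bs])
    finally show "(\<integral>S. A Bs S - (\<Sum>j<n. E Bs j S) / real n \<partial>\<Omega>) = (\<Sum>j<n. integral\<^sup>L (\<Omega> \<Otimes>\<^sub>M D) (F Bs j)) / real n" .
  qed
  also have "\<dots> = (\<Sum>j<n. \<Sum>Bs\<in>BS. integral\<^sup>L (\<Omega> \<Otimes>\<^sub>M D) (F Bs j)) / real n"
    by (simp add: sum_divide_distrib[symmetric] sum.swap[of _ BS])
  finally have g1: "gen_err_vanilla D h eps sel \<alpha> b w0 n T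
      = ((\<Sum>j<n. \<Sum>Bs\<in>BS. integral\<^sup>L (\<Omega> \<Otimes>\<^sub>M D) (F Bs j)) / real n) / N" .
  have each: "(\<Sum>Bs\<in>BS. integral\<^sup>L (\<Omega> \<Otimes>\<^sub>M D) (F Bs j)) / N \<le> RHS" if j: "j \<in> {..<n}" for j
  proof -
    have "(\<Sum>Bs\<in>BS. integral\<^sup>L (\<Omega> \<Otimes>\<^sub>M D) (F Bs j)) / N = (\<integral>x. (\<Sum>Bs\<in>BS. F Bs j x) \<partial>(\<Omega> \<Otimes>\<^sub>M D)) / N"
      using Bochner_Integration.integral_sum[of BS "\<Omega> \<Otimes>\<^sub>M D" "\<lambda>Bs. F Bs j"] iF[OF _ j] by simp
    also have "\<dots> = (\<integral>x. (\<Sum>Bs\<in>BS. F Bs j x) / N \<partial>(\<Omega> \<Otimes>\<^sub>M D))"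
      by (rule integral_divide_zero[symmetric])
    also have "\<dots> \<le> (\<integral>x. RHS \<partial>(\<Omega> \<Otimes>\<^sub>M D))"
    proof (rule integral_mono)
      show "integrable (\<Omega> \<Otimes>\<^sub>M D) (\<lambda>x. (\<Sum>Bs\<in>BS. F Bs j x) / N)"
        using iF[OF _ j] by (intro integrable_divide_zero Bochner_Integration.integrable_sum) auto
      show "integrable (\<Omega> \<Otimes>\<^sub>M D) (\<lambda>x. RHS)" by (rule PM.integrable_const)
      fix x :: "(nat \<Rightarrow> 'z) \<times> 'z"
      have SS: "\<forall>k. k \<noteq> j \<longrightarrow> ((fst x)(j := snd x)) k = fst x k" by simp
      have "(\<Sum>Bs\<in>BS. hmax h eps (W (fst x) Bs T) (snd x) - hmax h eps (W ((fst x)(j := snd x)) Bs T) (snd x)) / real (card BS) \<le> RHS"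
        using stab[where i=j and S="fst x" and S'="(fst x)(j := snd x)" and z="snd x"] j SS by simp
      then show "(\<Sum>Bs\<in>BS. F Bs j x) / N \<le> RHS" unfolding F_def N_def .
    qed
    also have "(\<integral>x. RHS \<partial>(\<Omega> \<Otimes>\<^sub>M D)) = RHS" by (simp add: PM.prob_space)
    finally show ?thesis .
  qed
  have "(\<Sum>j<n. \<Sum>Bs\<in>BS. integral\<^sup>L (\<Omega> \<Otimes>\<^sub>M D) (F Bs j)) / N \<le> (\<Sum>j<n. RHS)"
  proof -
    have "(\<Sum>j<n. \<Sum>Bs\<in>BS. integral\<^sup>L (\<Omega> \<Otimes>\<^sub>M D) (F Bs j)) / N = (\<Sum>j<n. (\<Sum>Bs\<in>BS. integral\<^sup>L (\<Omega> \<Otimes>\<^sub>M D) (F Bs j)) / N)"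
      by (rule sum_divide_distrib)
    also have "\<dots> \<le> (\<Sum>j<n. RHS)" by (rule sum_mono) (rule each)
    finally show ?thesis .
  qed
  then have "((\<Sum>j<n. \<Sum>Bs\<in>BS. integral\<^sup>L (\<Omega> \<Otimes>\<^sub>M D) (F Bs j)) / N) / real n \<le> (\<Sum>j<n. RHS) / real n"
    using n0 by (intro divide_right_mono) auto
  also have "(\<Sum>j<n. RHS) / real n = RHS" using n0 by simp
  finally show ?thesis unfolding g1 by (simp add: field_simps)
qed

end

theorem theorem2:
  fixes D :: "'z measure"
    and h :: "'w::euclidean_space \<Rightarrow> 'd::euclidean_space \<Rightarrow> 'z \<Rightarrow> real"
    and sel :: "'w \<Rightarrow> 'z \<Rightarrow> 'd"
    and \<alpha> :: "nat \<Rightarrow> real"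
    and w0 :: 'w
    and L Lw \<beta> eps c :: real
    and n b T :: nat
  assumes D: "prob_space D"
    and meas_h: "\<And>w \<delta>. (\<lambda>z. h w \<delta> z) \<in> borel_measurable D"
    and meas_sel: "(\<lambda>p. sel (fst p) (snd p)) \<in> borel \<Otimes>\<^sub>M D \<rightarrow>\<^sub>M borel"
    and eps: "eps > 0"
    and range01: "\<And>w \<delta> z. \<delta> \<in> cball 0 eps \<Longrightarrow> 0 \<le> h w \<delta> z \<and> h w \<delta> z \<le> 1"
    and L: "L \<ge> 0" and Lw: "Lw \<ge> 0" and beta: "\<beta> > 0"
    and A1a: "\<And>z w w' \<delta> \<delta>'. \<delta> \<in> cball 0 eps \<Longrightarrow> \<delta>' \<in> cball 0 eps \<Longrightarrow>
               \<bar>h w \<delta> z - h w' \<delta>' z\<bar>\<^sup>2 \<le> L\<^sup>2 * ((norm (w - w'))\<^sup>2 + (norm (\<delta> - \<delta>'))\<^sup>2)"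
    and A1b: "\<And>z w w' \<delta>. \<delta> \<in> cball 0 eps \<Longrightarrow> \<bar>h w \<delta> z - h w' \<delta> z\<bar> \<le> Lw * norm (w - w')"
    and A2: "\<And>z. \<exists>Gw Gd.
               (\<forall>w \<delta>. \<delta> \<in> cball 0 eps \<longrightarrow>
                  ((\<lambda>p. h (fst p) (snd p) z) has_derivative
                     (\<lambda>q. Gw w \<delta> \<bullet> fst q + Gd w \<delta> \<bullet> snd q)) (at (w, \<delta>) within UNIV \<times> cball 0 eps))
             \<and> (\<forall>w w' \<delta> \<delta>'. \<delta> \<in> cball 0 eps \<longrightarrow> \<delta>' \<in> cball 0 eps \<longrightarrow>
                  (norm (Gw w \<delta> - Gw w' \<delta>'))\<^sup>2 + (norm (Gd w \<delta> - Gd w' \<delta>'))\<^sup>2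
                    \<le> \<beta>\<^sup>2 * ((norm (w - w'))\<^sup>2 + (norm (\<delta> - \<delta>'))\<^sup>2))"
    and sel_argmax: "\<And>w z. sel w z \<in> cball 0 eps \<and> (\<forall>\<delta>\<in>cball 0 eps. h w \<delta> z \<le> h w (sel w z) z)"
    and c: "c > 0"
    and step: "\<And>t. 1 \<le> t \<Longrightarrow> 0 \<le> \<alpha> t \<and> \<alpha> t \<le> c / real t"
    and b: "1 \<le> b" "b \<le> n"
  shows "gen_err_vanilla D h eps sel \<alpha> b w0 n T
           \<le> real b / real n * (1 + 1 / (\<beta> * c))
             * ((2 * Lw * c / real b) * (eps * \<beta> * real n + L)) powr (1 / (\<beta> * c + 1))
             * real T powr ((\<beta> * c) / (\<beta> * c + 1))"
proof -
  interpret V: vsetup D h sel \<alpha> w0 L Lw \<beta> eps c n b T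
    by (rule vsetup.intro; fact)
  show ?thesis using V.main unfolding V.RHS_def .
qed

end
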